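(* Let $\ell>0$ and let $\gamma\in C^2([0,\ell];\mathbb R^2)$ be a closed curve parametrized by arclength, of length $\ell$, with $\partial_s\gamma(0)=\partial_s\gamma(\ell)$, $\partial_s^2\gamma(0)=\partial_s^2\gamma(\ell)$, and let $\theta$ be a continuous lifting with $\partial_s\gamma=(\cos\theta,\sin\theta)$. For $\epsilon\in(0,1]$ let $\gamma_\epsilon\in H^2([0,\ell];\mathbb R^2)$ be closed curves parametrized by arclength of length $\ell$ with $\gamma_\epsilon(0)=\gamma_\epsilon(\ell)$, $\partial_s\gamma_\epsilon(0)=\partial_s\gamma_\epsilon(\ell)$, and assume there is $C>0$ with $\epsilon^{1/2}\int_0^\ell\kappa_{\gamma_\epsilon}^2\,ds\le C$ and $\int_0^\ell|\partial_s\gamma_\epsilon-\partial_s\gamma|^2\,ds\le C\epsilon^{1/2}$. Let $\theta_\epsilon\in H^1$ with $\partial_s\gamma_\epsilon=(\cos\theta_\epsilon,\sin\theta_\epsilon)$, $\phi_\epsilon=\theta_\epsilon-\theta$, and $\Phi(r)=\int_0^r2\sqrt{1-\cos t}\,dt$. Then $$\lim_{\epsilon\to0^+}\Big\|\frac{2\pi}{8\sqrt2}\partial_s(\Phi\circ\phi_\epsilon)-\partial_s\phi_\epsilon\Big\|_{\mathrm{flat},[0,\ell]}=0.$$ In particular, if $\epsilon_k\to0^+$ and $\omega\in M_{\mathrm{fin},\mathbb Z}([0,\ell])$ satisfy $\|(\kappa_{\gamma_{\epsilon_k}}-\kappa_\gamma)-\omega\|_{\mathrm{flat},[0,\ell]}\to0$,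 then $\frac{2\pi}{8\sqrt2}\partial_s(\Phi\circ\phi_{\epsilon_k})\to\omega$ in the flat norm.
   Context: $\kappa_{\gamma_\epsilon}=\partial_s\theta_\epsilon$, $\kappa_\gamma=\partial_s\theta$ are the signed curvatures. $M_{\mathrm{fin},\mathbb Z}([0,\ell])$ is the set of measures $2\pi\sum_{j=1}^Nc_j\delta_{s_j}$ with $c_j\in\mathbb Z$, $0\le s_1<\dots<s_N\le\ell$. The flat norm is $\|\nu\|_{\mathrm{flat},[0,\ell]}=\sup\{\int\psi\,d\nu:\psi\in C^{0,1}([0,\ell]),\ \|\psi\|_{L^\infty}+\mathrm{Lip}(\psi)\le1,\ \psi(0)=\psi(\ell)\}$. *)

theory Defs
  imports "HOL-Analysis.Analysis"
begin

text \<open>Weak (distributional) derivative on [0,l]: g is an L1 function with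
  f s = f 0 + int_0^s g for all s in [0,l] (so f is absolutely continuous).\<close>
definition has_weak_deriv :: "real \<Rightarrow> (real \<Rightarrow> real) \<Rightarrow> (real \<Rightarrow> real) \<Rightarrow> bool" where
  "has_weak_deriv l f g \<longleftrightarrow>
     g absolutely_integrable_on {0..l} \<and> (\<forall>s\<in>{0..l}. f s = f 0 + integral {0..s} g)"

text \<open>Sobolev space H^1([0,l]) (continuous representative).\<close>
definition H1 :: "real \<Rightarrow> (real \<Rightarrow> real) \<Rightarrow> bool" where
  "H1 l f \<longleftrightarrow> (\<exists>g. has_weak_deriv l f g \<and> (\<lambda>s. (g s)^2) integrable_on {0..l})"

text \<open>The weak derivative \<partial>_s f (determined up to a null set).\<close>
definition wderiv :: "real \<Rightarrow> (real \<Rightarrow> real) \<Rightarrow> real \<Rightarrow> real" where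
  "wderiv l f = (SOME g. has_weak_deriv l f g)"

definition flat_test :: "real \<Rightarrow> (real \<Rightarrow> real) \<Rightarrow> bool" where
  "flat_test l \<psi> \<longleftrightarrow> (\<exists>L\<ge>0. L-lipschitz_on {0..l} \<psi> \<and> (\<forall>s\<in>{0..l}. \<bar>\<psi> s\<bar> + L \<le> 1))
      \<and> \<psi> 0 = \<psi> l"

text \<open>Flat norm of a measure nu on [0,l], given through its pairing
  nu_pair psi = int psi d nu.\<close>
definition flat_norm :: "real \<Rightarrow> ((real \<Rightarrow> real) \<Rightarrow> real) \<Rightarrow> real" where
  "flat_norm l \<nu> = Sup {\<nu> \<psi> | \<psi>. flat_test l \<psi>}"

text \<open>Pairing of the absolutely continuous measure g ds with psi.\<close>
definition pair_density :: "real \<Rightarrow> (real \<Rightarrow> real) \<Rightarrow> (real \<Rightarrow> real) \<Rightarrow> real" where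
  "pair_density l g \<psi> = integral {0..l} (\<lambda>s. \<psi> s * g s)"

text \<open>Pairing of omega = 2 pi sum_{j<N} c_j delta_{s_j} with psi.\<close>
definition pair_atoms :: "nat \<Rightarrow> (nat \<Rightarrow> int) \<Rightarrow> (nat \<Rightarrow> real) \<Rightarrow> (real \<Rightarrow> real) \<Rightarrow> real" where
  "pair_atoms N c p \<psi> = 2 * pi * (\<Sum>j<N. of_int (c j) * \<psi> (p j))"

definition Mfin_Z :: "real \<Rightarrow> nat \<Rightarrow> (nat \<Rightarrow> int) \<Rightarrow> (nat \<Rightarrow> real) \<Rightarrow> bool" where
  "Mfin_Z l N c p \<longleftrightarrow> (\<forall>j<N. 0 \<le> p j \<and> p j \<le> l) \<and> (\<forall>i j. i < j \<and> j < N \<longrightarrow> p i < p j)"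

definition Phi :: "real \<Rightarrow> real" where
  "Phi r = (if 0 \<le> r then integral {0..r} (\<lambda>t. 2 * sqrt (1 - cos t))
            else - integral {r..0} (\<lambda>t. 2 * sqrt (1 - cos t)))"

end

theory Submission
  imports Defs
begin
lemma integral_partition:
  fixes f :: "real \<Rightarrow> real" and t :: "nat \<Rightarrow> real"
  assumes "mono t" "f integrable_on {t 0..t n}"
  shows "integral {t 0..t n} f = (\<Sum>i<n. integral {t i..t (Suc i)} f)"
  using assms(2)
proof (induction n)
  case 0 then show ?case by simp
next
  case (Suc n)
  have le: "t 0 \<le> t n" "t n \<le> t (Suc n)" using assms(1) by (auto simp: monoD)
  have "f integrable_on {t 0..t n}"
    using Suc.prems integrable_on_subinterval le by fastforce
  then have IH: "integral {t 0..t n} f = (\<Sum>i<n. integral {t i..t (Suc i)} f)" using Suc.IH by blast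
  have "integral {t 0..t (Suc n)} f = integral {t 0..t n} f + integral {t n..t (Suc n)} f"
    using Henstock_Kurzweil_Integration.integral_combine[OF le Suc.prems] by simp
  then show ?case using IH by simp
qed

lemma partition_estimate:
  fixes h \<psi> :: "real \<Rightarrow> real" and t :: "nat \<Rightarrow> real"
  assumes mono: "mono t"
    and hi: "h integrable_on {t 0..t n}" "(\<lambda>x. \<bar>h x\<bar>) integrable_on {t 0..t n}"
    and phi: "(\<lambda>x. \<psi> x * h x) integrable_on {t 0..t n}"
    and osc: "\<forall>i<n. \<forall>x\<in>{t i..t (Suc i)}. \<bar>\<psi> x - \<psi> (t i)\<bar> \<le> \<delta>"
  shows "\<bar>integral {t 0..t n} (\<lambda>x. \<psi> x * h x) - (\<Sum>i<n. \<psi> (t i) * integral {t i..t (Suc i)} h)\<bar>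
          \<le> \<delta> * integral {t 0..t n} (\<lambda>x. \<bar>h x\<bar>)"
proof -
  have sub: "{t i..t (Suc i)} \<subseteq> {t 0..t n}" if "i < n" for i
    using mono that by (auto simp: monoD intro: order_trans[of _ "t i"] order_trans[of _ "t (Suc i)"])
  have piece: "\<bar>integral {t i..t (Suc i)} (\<lambda>x. \<psi> x * h x) - \<psi> (t i) * integral {t i..t (Suc i)} h\<bar>
      \<le> \<delta> * integral {t i..t (Suc i)} (\<lambda>x. \<bar>h x\<bar>)" if i: "i < n" for i
  proof -
    let ?I = "{t i..t (Suc i)}"
    have i1: "h integrable_on ?I" "(\<lambda>x. \<bar>h x\<bar>) integrable_on ?I" "(\<lambda>x. \<psi> x * h x) integrable_on ?I"
      using hi phi sub[OF i] integrable_on_subinterval by blast+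
    have "integral ?I (\<lambda>x. \<psi> x * h x) - \<psi> (t i) * integral ?I h
          = integral ?I (\<lambda>x. (\<psi> x - \<psi> (t i)) * h x)"
    proof -
      have "(\<lambda>x. \<psi> (t i) * h x) integrable_on ?I" using i1(1) by (rule integrable_on_mult_right)
      then show ?thesis using i1 by (simp add: left_diff_distrib integral_diff)
    qed
    also have "\<bar>\<dots>\<bar> \<le> integral ?I (\<lambda>x. \<delta> * \<bar>h x\<bar>)"
    proof -
      have "norm (integral ?I (\<lambda>x. (\<psi> x - \<psi> (t i)) * h x)) \<le> integral ?I (\<lambda>x. \<delta> * \<bar>h x\<bar>)"
      proof (rule integral_norm_bound_integral)
        show "(\<lambda>x. (\<psi> x - \<psi> (t i)) * h x) integrable_on ?I"
          using integrable_diff[OF i1(3) integrable_on_mult_right[OF i1(1), of "\<psi> (t i)"]]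
          by (simp add: left_diff_distrib)
        show "(\<lambda>x. \<delta> * \<bar>h x\<bar>) integrable_on ?I"
          using integrable_on_mult_right[OF i1(2), of \<delta>] .
        fix x assume "x \<in> ?I"
        then show "norm ((\<psi> x - \<psi> (t i)) * h x) \<le> \<delta> * \<bar>h x\<bar>"
          using osc i by (simp add: abs_mult mult_right_mono)
      qed
      then show ?thesis by simp
    qed
    also have "\<dots> = \<delta> * integral ?I (\<lambda>x. \<bar>h x\<bar>)" by simp
    finally show ?thesis .
  qed
  have eq: "integral {t 0..t n} (\<lambda>x. \<psi> x * h x) - (\<Sum>i<n. \<psi> (t i) * integral {t i..t (Suc i)} h)
      = (\<Sum>i<n. integral {t i..t (Suc i)} (\<lambda>x. \<psi> x * h x) - \<psi> (t i) * integral {t i..t (Suc i)} h)"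
    using integral_partition[OF mono phi] by (simp add: sum_subtractf)
  have "\<bar>(\<Sum>i<n. integral {t i..t (Suc i)} (\<lambda>x. \<psi> x * h x) - \<psi> (t i) * integral {t i..t (Suc i)} h)\<bar> \<le> (\<Sum>i<n. \<bar>integral {t i..t (Suc i)} (\<lambda>x. \<psi> x * h x) - \<psi> (t i) * integral {t i..t (Suc i)} h\<bar>)"
    by (rule sum_abs)
  also have "\<dots> \<le> (\<Sum>i<n. \<delta> * integral {t i..t (Suc i)} (\<lambda>x. \<bar>h x\<bar>))"
    by (rule sum_mono, rule piece, simp)
  also have "\<dots> = \<delta> * integral {t 0..t n} (\<lambda>x. \<bar>h x\<bar>)"
    using integral_partition[OF mono hi(2)] by (simp add: sum_distrib_left)
  finally show ?thesis using eq by simp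
qed

lemma le_by_nat_eps:
  fixes x y a :: real
  assumes "a \<ge> 0" "\<And>n::nat. n > 0 \<Longrightarrow> x \<le> y + a / real n"
  shows "x \<le> y"
proof (rule ccontr)
  assume "\<not> x \<le> y"
  then have d: "x - y > 0" by simp
  obtain n :: nat where n: "a / (x - y) < real n" using reals_Archimedean2 by blast
  have "0 \<le> a / (x - y)" using assms(1) d by simp
  then have npos: "n > 0" using n by linarith
  have "a < real n * (x - y)" using n d by (simp add: divide_less_eq mult.commute)
  then have "a / real n < x - y" using npos by (simp add: divide_less_eq mult.commute)
  then show False using assms(2)[OF npos] by linarith
qed

lemma uniform_partition:
  fixes l :: real and n :: nat
  assumes "l \<ge> 0" "n > 0" and t_def: "t = (\<lambda>i. real i * l / real n)"
  shows "mono t" "t 0 = 0" "t n = l" "\<And>i. t (Suc i) - t i = l / real n"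
    "\<And>i. i \<le> n \<Longrightarrow> t i \<in> {0..l}"
proof -
  show "mono t" unfolding t_def
    by (rule monoI) (simp add: assms divide_right_mono mult_right_mono)
  show "t 0 = 0" "t n = l" using assms by (auto simp: t_def)
  show "t (Suc i) - t i = l / real n" for i by (simp add: t_def algebra_simps add_divide_distrib)
  show "t i \<in> {0..l}" if "i \<le> n" for i
  proof -
    have "real i * l \<le> real n * l" using that assms by (simp add: mult_right_mono)
    then show ?thesis using assms by (simp add: t_def divide_le_eq mult.commute)
  qed
qed

lemma ibp_bound:
  fixes h g \<psi> :: "real \<Rightarrow> real" and l L :: real
  assumes l: "l \<ge> 0" and L: "L \<ge> 0"
    and hi: "h integrable_on {0..l}" "(\<lambda>x. \<bar>h x\<bar>) integrable_on {0..l}"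
    and phi: "(\<lambda>x. \<psi> x * h x) integrable_on {0..l}"
    and gdef: "\<forall>s\<in>{0..l}. g s = g 0 + integral {0..s} h"
    and g0l: "g l = g 0"
    and lip: "L-lipschitz_on {0..l} \<psi>" and psi0: "\<psi> 0 = \<psi> l"
  shows "\<bar>integral {0..l} (\<lambda>x. \<psi> x * h x)\<bar> \<le> L * integral {0..l} (\<lambda>x. \<bar>g x\<bar>)"
proof -
  have gcont: "continuous_on {0..l} g"
  proof -
    have "continuous_on {0..l} (\<lambda>s. g 0 + integral {0..s} h)"
      by (intro continuous_intros indefinite_integral_continuous_1 hi)
    then show ?thesis using gdef by (metis (no_types, lifting) continuous_on_eq)
  qed
  have ga: "(\<lambda>x. \<bar>g x\<bar>) integrable_on {0..l}"
    by (intro integrable_continuous_interval continuous_intros gcont)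
  have lipD: "\<bar>\<psi> x - \<psi> y\<bar> \<le> L * \<bar>x - y\<bar>" if "x \<in> {0..l}" "y \<in> {0..l}" for x y
    using lipschitz_onD[OF lip that] by (simp add: dist_real_def)
  have gdiff: "g y - g x = integral {x..y} h" if "x \<in> {0..l}" "y \<in> {0..l}" "x \<le> y" for x y
  proof -
    have "h integrable_on {0..y}" using integrable_on_subinterval[OF hi(1), of 0 y] that by auto
    then have "integral {0..x} h + integral {x..y} h = integral {0..y} h"
      using Henstock_Kurzweil_Integration.integral_combine[of 0 x y h] that by auto
    moreover have "g x = g 0 + integral {0..x} h" "g y = g 0 + integral {0..y} h"
      using gdef that by blast+
    ultimately show ?thesis by linarith
  qed
  have main: "\<bar>integral {0..l} (\<lambda>x. \<psi> x * h x)\<bar>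
      \<le> L * integral {0..l} (\<lambda>x. \<bar>g x\<bar>) + (2 * L * l * integral {0..l} (\<lambda>x. \<bar>h x\<bar>)) / real n"
    if n: "n > 0" for n :: nat
  proof -
    define t where "t = (\<lambda>i. real i * l / real n)"
    note tp = uniform_partition[OF l n t_def]
    define d where "d = l / real n"
    have d0: "d \<ge> 0" using l by (simp add: d_def)
    have tin: "t i \<in> {0..l}" "t (Suc i) \<in> {0..l}" "t i \<le> t (Suc i)" if "i < n" for i
      using tp(5)[of i] tp(5)[of "Suc i"] that monoD[OF tp(1), of i "Suc i"] by auto
    have IS: "{t i..t (Suc i)} \<subseteq> {0..l}" if "i < n" for i using tin[OF that] by auto
    have hI: "integral {t i..t (Suc i)} h = g (t (Suc i)) - g (t i)" if "i < n" for i
      using gdiff[OF tin[OF that]] by simp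
    have est: "\<bar>integral {0..l} (\<lambda>x. \<psi> x * h x) - (\<Sum>i<n. \<psi> (t i) * integral {t i..t (Suc i)} h)\<bar>
          \<le> (L * d) * integral {0..l} (\<lambda>x. \<bar>h x\<bar>)"
    proof -
      have "\<forall>i<n. \<forall>x\<in>{t i..t (Suc i)}. \<bar>\<psi> x - \<psi> (t i)\<bar> \<le> L * d"
      proof (intro allI impI ballI)
        fix i x assume i: "i < n" and x: "x \<in> {t i..t (Suc i)}"
        have "\<bar>\<psi> x - \<psi> (t i)\<bar> \<le> L * \<bar>x - t i\<bar>" using x tin[OF i] by (intro lipD) auto
        also have "\<dots> \<le> L * d" using x tp(4)[of i] L by (intro mult_left_mono) (auto simp: d_def)
        finally show "\<bar>\<psi> x - \<psi> (t i)\<bar> \<le> L * d" .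
      qed
      from partition_estimate[OF tp(1), where n=n and h=h and \<psi>=\<psi> and \<delta>="L*d", unfolded tp(2) tp(3), OF hi phi this]
      show ?thesis .
    qed
    define S where "S = (\<Sum>i<n. \<psi> (t i) * integral {t i..t (Suc i)} h)"
    have S_eq: "S = (\<Sum>i<n. (\<psi> (t i) - \<psi> (t (Suc i))) * g (t (Suc i)))"
    proof -
      have "S = (\<Sum>i<n. \<psi> (t i) * (g (t (Suc i)) - g (t i)))"
        unfolding S_def by (rule sum.cong) (auto simp: hI)
      also have "\<dots> = (\<Sum>i<n. (\<psi> (t i) - \<psi> (t (Suc i))) * g (t (Suc i)))
          + (\<Sum>i<n. \<psi> (t (Suc i)) * g (t (Suc i)) - \<psi> (t i) * g (t i))"
        by (simp add: sum.distrib[symmetric] algebra_simps)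
      also have "(\<Sum>i<n. \<psi> (t (Suc i)) * g (t (Suc i)) - \<psi> (t i) * g (t i)) = 0"
        using sum_lessThan_telescope[of "\<lambda>i. \<psi> (t i) * g (t i)" n] tp(2,3) psi0 g0l by simp
      finally show ?thesis by simp
    qed
    have pt: "d * \<bar>g (t (Suc i))\<bar> \<le> integral {t i..t (Suc i)} (\<lambda>x. \<bar>g x\<bar>)
              + d * integral {t i..t (Suc i)} (\<lambda>x. \<bar>h x\<bar>)" if i: "i < n" for i
    proof -
      let ?I = "{t i..t (Suc i)}"
      let ?A = "integral ?I (\<lambda>x. \<bar>h x\<bar>)"
      have gaI: "(\<lambda>x. \<bar>g x\<bar>) integrable_on ?I" using integrable_on_subinterval[OF ga IS[OF i]] .
      have haI: "(\<lambda>x. \<bar>h x\<bar>) integrable_on ?I" using integrable_on_subinterval[OF hi(2) IS[OF i]] .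
      have pw: "\<bar>g (t (Suc i))\<bar> \<le> \<bar>g x\<bar> + ?A" if x: "x \<in> ?I" for x
      proof -
        have xin: "x \<in> {0..l}" using x IS[OF i] by auto
        have sub: "{x..t (Suc i)} \<subseteq> ?I" using x by auto
        have "\<bar>g (t (Suc i)) - g x\<bar> = \<bar>integral {x..t (Suc i)} h\<bar>"
          using gdiff[OF xin tin(2)[OF i]] x by auto
        also have "\<dots> \<le> integral {x..t (Suc i)} (\<lambda>x. \<bar>h x\<bar>)"
        proof -
          have s2: "{x..t (Suc i)} \<subseteq> {0..l}" using sub IS[OF i] by blast
          show ?thesis
            using integral_norm_bound_integral[of h "{x..t (Suc i)}" "\<lambda>x. \<bar>h x\<bar>"]
              integrable_on_subinterval[OF hi(1) s2] integrable_on_subinterval[OF hi(2) s2]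
            by simp
        qed
        also have "\<dots> \<le> ?A"
          by (rule integral_subset_le) (use sub haI integrable_on_subinterval[OF haI sub] in auto)
        finally show ?thesis by linarith
      qed
      have "d * \<bar>g (t (Suc i))\<bar> = integral ?I (\<lambda>x. \<bar>g (t (Suc i))\<bar>)"
        using tp(4)[of i] tin[OF i] by (simp add: d_def mult.commute)
      also have "\<dots> \<le> integral ?I (\<lambda>x. \<bar>g x\<bar> + ?A)"
        by (rule integral_le) (use pw gaI integrable_add[OF gaI integrable_const_ivl] in auto)
      also have "\<dots> = integral ?I (\<lambda>x. \<bar>g x\<bar>) + d * ?A"
        using tp(4)[of i] tin[OF i] by (simp add: integral_add[OF gaI integrable_const_ivl] d_def)
      finally show ?thesis .
    qed
    have "\<bar>S\<bar> \<le> (\<Sum>i<n. \<bar>(\<psi> (t i) - \<psi> (t (Suc i))) * g (t (Suc i))\<bar>)"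
      unfolding S_eq by (rule sum_abs)
    also have "\<dots> \<le> (\<Sum>i<n. L * (d * \<bar>g (t (Suc i))\<bar>))"
    proof (rule sum_mono)
      fix i assume "i \<in> {..<n}"
      then have i: "i < n" by simp
      have "\<bar>\<psi> (t i) - \<psi> (t (Suc i))\<bar> \<le> L * \<bar>t i - t (Suc i)\<bar>" using lipD tin[OF i] by blast
      also have "\<dots> = L * d" using tp(4)[of i] d0 by (simp add: d_def abs_minus_commute)
      finally show "\<bar>(\<psi> (t i) - \<psi> (t (Suc i))) * g (t (Suc i))\<bar> \<le> L * (d * \<bar>g (t (Suc i))\<bar>)"
        by (simp add: abs_mult) (metis abs_ge_zero mult.assoc mult_right_mono)
    qed
    also have "\<dots> \<le> (\<Sum>i<n. L * (integral {t i..t (Suc i)} (\<lambda>x. \<bar>g x\<bar>)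
              + d * integral {t i..t (Suc i)} (\<lambda>x. \<bar>h x\<bar>)))"
      by (rule sum_mono) (use pt L in \<open>auto intro: mult_left_mono\<close>)
    also have "\<dots> = L * integral {0..l} (\<lambda>x. \<bar>g x\<bar>) + L * d * integral {0..l} (\<lambda>x. \<bar>h x\<bar>)"
      using integral_partition[OF tp(1), of "\<lambda>x. \<bar>g x\<bar>" n, unfolded tp(2,3), OF ga]
        integral_partition[OF tp(1), of "\<lambda>x. \<bar>h x\<bar>" n, unfolded tp(2,3), OF hi(2)]
      by (simp add: sum.distrib sum_distrib_left algebra_simps)
    finally have Sb: "\<bar>S\<bar> \<le> L * integral {0..l} (\<lambda>x. \<bar>g x\<bar>) + L * d * integral {0..l} (\<lambda>x. \<bar>h x\<bar>)" .
    have "\<bar>integral {0..l} (\<lambda>x. \<psi> x * h x)\<bar> \<le> \<bar>S\<bar> + (L * d) * integral {0..l} (\<lambda>x. \<bar>h x\<bar>)"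
      using est unfolding S_def by linarith
    also have "\<dots> \<le> L * integral {0..l} (\<lambda>x. \<bar>g x\<bar>) + (2 * L * l * integral {0..l} (\<lambda>x. \<bar>h x\<bar>)) / real n"
    proof -
      have "(2 * L * l * integral {0..l} (\<lambda>x. \<bar>h x\<bar>)) / real n = 2 * (L * d * integral {0..l} (\<lambda>x. \<bar>h x\<bar>))"
        by (simp add: d_def)
      then show ?thesis using Sb by linarith
    qed
    finally show ?thesis .
  qed
  have "integral {0..l} (\<lambda>x. \<bar>h x\<bar>) \<ge> 0" by (rule integral_nonneg) (use hi in auto)
  then show ?thesis
    by (intro le_by_nat_eps[OF _ main]) (use l L in auto)
qed

lemma prim_diff:
  fixes h g :: "real \<Rightarrow> real"
  assumes hi: "h integrable_on {0..l}" and gdef: "\<forall>s\<in>{0..l}. g s = g 0 + integral {0..s} h"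
    and that: "x \<in> {0..l}" "y \<in> {0..l}" "x \<le> y"
  shows "g y - g x = integral {x..y} h"
proof -
  have "h integrable_on {0..y}" using integrable_on_subinterval[OF hi, of 0 y] that by auto
  then have "integral {0..x} h + integral {x..y} h = integral {0..y} h"
    using Henstock_Kurzweil_Integration.integral_combine[of 0 x y h] that by auto
  moreover have "g x = g 0 + integral {0..x} h" "g y = g 0 + integral {0..y} h"
    using gdef that by blast+
  ultimately show ?thesis by linarith
qed

lemma prim_cont:
  fixes h g :: "real \<Rightarrow> real"
  assumes hi: "h integrable_on {0..l}" and gdef: "\<forall>s\<in>{0..l}. g s = g 0 + integral {0..s} h"
  shows "continuous_on {0..l} g"
proof -
  have "continuous_on {0..l} (\<lambda>s. g 0 + integral {0..s} h)"
    by (intro continuous_intros indefinite_integral_continuous_1 hi)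
  then show ?thesis using gdef by (metis (no_types, lifting) continuous_on_eq)
qed

lemma zero_by_eps:
  fixes X K :: real
  assumes "K \<ge> 0" "\<And>\<eta>. \<eta> > 0 \<Longrightarrow> \<bar>X\<bar> \<le> \<eta> * K"
  shows "X = 0"
proof (rule ccontr)
  assume "X \<noteq> 0"
  then have p: "\<bar>X\<bar> > 0" by simp
  have "\<bar>X\<bar> \<le> (\<bar>X\<bar> / (K + 1)) * K" using assms(2)[of "\<bar>X\<bar> / (K + 1)"] p assms(1) by simp
  also have "\<dots> < \<bar>X\<bar>" using p assms(1) by (simp add: field_simps)
  finally show False by simp
qed

lemma taylor_lip:
  fixes F F' :: "real \<Rightarrow> real"
  assumes Fd: "\<And>x. (F has_real_derivative F' x) (at x)"
    and lip: "\<And>x y. \<bar>F' x - F' y\<bar> \<le> M * \<bar>x - y\<bar>"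
  shows "\<bar>F b - F a - F' a * (b - a)\<bar> \<le> M * (b - a)^2"
proof -
  have gen: "\<bar>F v - F u - F' w * (v - u)\<bar> \<le> M * (v - u)^2" if "u < v" "w = u \<or> w = v" for u v w
  proof -
    obtain z where z: "u < z" "z < v" "F v - F u = (v - u) * F' z"
      using MVT2[OF \<open>u < v\<close>] Fd by blast
    have "\<bar>F v - F u - F' w * (v - u)\<bar> = \<bar>F' z - F' w\<bar> * (v - u)"
    proof -
      have "F v - F u - F' w * (v - u) = (F' z - F' w) * (v - u)" using z(3) by (simp add: algebra_simps)
      then show ?thesis using that by (simp add: abs_mult)
    qed
    also have "\<dots> \<le> (M * \<bar>z - w\<bar>) * (v - u)" using lip that by (simp add: mult_right_mono)
    also have "\<dots> \<le> (M * (v - u)) * (v - u)"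
    proof -
      have M: "M \<ge> 0" using lip[of 1 0] by simp
      have "\<bar>z - w\<bar> \<le> v - u" using z that by auto
      then show ?thesis using M that by (intro mult_right_mono mult_left_mono) auto
    qed
    finally show ?thesis by (simp add: power2_eq_square)
  qed
  consider "a < b" | "a = b" | "b < a" by linarith
  then show ?thesis
  proof cases
    case 1 then show ?thesis using gen[of a b a] by simp
  next
    case 2 then show ?thesis by simp
  next
    case 3
    have "\<bar>F a - F b - F' a * (a - b)\<bar> \<le> M * (a - b)^2" using gen[of b a a] 3 by simp
    then show ?thesis by (simp add: algebra_simps power2_commute abs_minus_commute)
  qed
qed

lemma chain_rule_weak:
  fixes F F' \<phi> h :: "real \<Rightarrow> real"
  assumes hi: "h integrable_on {0..l}" "(\<lambda>x. \<bar>h x\<bar>) integrable_on {0..l}"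
    and pdef: "\<forall>s\<in>{0..l}. \<phi> s = \<phi> 0 + integral {0..s} h"
    and Fd: "\<And>x. (F has_real_derivative F' x) (at x)"
    and lip: "\<And>x y. \<bar>F' x - F' y\<bar> \<le> M * \<bar>x - y\<bar>"
    and pint: "(\<lambda>x. F' (\<phi> x) * h x) integrable_on {0..l}"
    and s: "s \<in> {0..l}"
  shows "F (\<phi> s) = F (\<phi> 0) + integral {0..s} (\<lambda>x. F' (\<phi> x) * h x)"
proof -
  have M: "M \<ge> 0" using lip[of 1 0] by simp
  have sub: "{0..s} \<subseteq> {0..l}" using s by auto
  have s0: "s \<ge> 0" using s by simp
  have hs: "h integrable_on {0..s}" "(\<lambda>x. \<bar>h x\<bar>) integrable_on {0..s}"
      "(\<lambda>x. F' (\<phi> x) * h x) integrable_on {0..s}"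
    using integrable_on_subinterval[OF hi(1) sub] integrable_on_subinterval[OF hi(2) sub]
      integrable_on_subinterval[OF pint sub] by auto
  have Is: "integral {0..s} (\<lambda>x. \<bar>h x\<bar>) \<ge> 0" by (rule integral_nonneg) (use hs in auto)
  have uc: "uniformly_continuous_on {0..s} \<phi>"
    using compact_uniformly_continuous[OF continuous_on_subset[OF prim_cont[OF hi(1) pdef] sub]] by simp
  have "F (\<phi> s) - F (\<phi> 0) - integral {0..s} (\<lambda>x. F' (\<phi> x) * h x) = 0"
  proof (rule zero_by_eps[of "2 * M * integral {0..s} (\<lambda>x. \<bar>h x\<bar>)"])
    show "0 \<le> 2 * M * integral {0..s} (\<lambda>x. \<bar>h x\<bar>)" using M Is by simp
    fix \<eta> :: real assume eta: "\<eta> > 0"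
    obtain \<delta> where dpos: "\<delta> > 0"
      and dd: "\<And>x y. x \<in> {0..s} \<Longrightarrow> y \<in> {0..s} \<Longrightarrow> \<bar>x - y\<bar> < \<delta> \<Longrightarrow> \<bar>\<phi> x - \<phi> y\<bar> < \<eta>"
      using uc eta unfolding uniformly_continuous_on_def dist_real_def by metis
    obtain n :: nat where n: "s / \<delta> < real n" using reals_Archimedean2 by blast
    have "0 \<le> s / \<delta>" using s0 dpos by simp
    then have npos: "n > 0" using n by linarith
    have sd: "s / real n < \<delta>"
    proof -
      have "s < real n * \<delta>" using n dpos by (simp add: divide_less_eq)
      then show ?thesis using npos by (simp add: divide_less_eq mult.commute)
    qed
    define t where "t = (\<lambda>i. real i * s / real n)"
    note tp = uniform_partition[OF s0 npos t_def]
    have tin: "t i \<in> {0..s}" "t (Suc i) \<in> {0..s}" "t i \<le> t (Suc i)" if "i < n" for i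
      using tp(5)[of i] tp(5)[of "Suc i"] that monoD[OF tp(1), of i "Suc i"] by auto
    have tinl: "t i \<in> {0..l}" "t (Suc i) \<in> {0..l}" if "i < n" for i
      using tin[OF that] sub by auto
    have close: "\<bar>\<phi> x - \<phi> (t i)\<bar> < \<eta>" if i: "i < n" and x: "x \<in> {t i..t (Suc i)}" for i x
    proof -
      have "\<bar>x - t i\<bar> < \<delta>" using x tp(4)[of i] sd by auto
      moreover have "x \<in> {0..s}" using x tin[OF i] by auto
      ultimately show ?thesis using dd tin[OF i] by blast
    qed
    have dif: "integral {t i..t (Suc i)} h = \<phi> (t (Suc i)) - \<phi> (t i)" if i: "i < n" for i
      using prim_diff[OF hi(1) pdef tinl[OF i] tin(3)[OF i]] by simp
    have osc: "\<forall>i<n. \<forall>x\<in>{t i..t (Suc i)}. \<bar>F' (\<phi> x) - F' (\<phi> (t i))\<bar> \<le> M * \<eta>"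
    proof (intro allI impI ballI)
      fix i x assume i: "i < n" and x: "x \<in> {t i..t (Suc i)}"
      have "\<bar>F' (\<phi> x) - F' (\<phi> (t i))\<bar> \<le> M * \<bar>\<phi> x - \<phi> (t i)\<bar>" by (rule lip)
      also have "\<dots> \<le> M * \<eta>" using close[OF i x] M by (intro mult_left_mono) auto
      finally show "\<bar>F' (\<phi> x) - F' (\<phi> (t i))\<bar> \<le> M * \<eta>" .
    qed
    have est1: "\<bar>integral {0..s} (\<lambda>x. F' (\<phi> x) * h x) - (\<Sum>i<n. F' (\<phi> (t i)) * integral {t i..t (Suc i)} h)\<bar>
        \<le> (M * \<eta>) * integral {0..s} (\<lambda>x. \<bar>h x\<bar>)"
      using partition_estimate[OF tp(1), where n=n and h=h and \<psi>="\<lambda>x. F' (\<phi> x)" and \<delta>="M*\<eta>",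
          unfolded tp(2) tp(3), OF hs osc] .
    have tele: "F (\<phi> s) - F (\<phi> 0) = (\<Sum>i<n. F (\<phi> (t (Suc i))) - F (\<phi> (t i)))"
      using sum_lessThan_telescope[of "\<lambda>i. F (\<phi> (t i))" n] tp(2,3) by simp
    have piece: "\<bar>(F (\<phi> (t (Suc i))) - F (\<phi> (t i))) - F' (\<phi> (t i)) * integral {t i..t (Suc i)} h\<bar>
        \<le> M * \<eta> * integral {t i..t (Suc i)} (\<lambda>x. \<bar>h x\<bar>)" if i: "i < n" for i
    proof -
      let ?a = "\<phi> (t i)" and ?b = "\<phi> (t (Suc i))"
      have I: "{t i..t (Suc i)} \<subseteq> {0..l}" using tinl[OF i] by auto
      have b1: "\<bar>?b - ?a\<bar> < \<eta>" using close[OF i, of "t (Suc i)"] tin[OF i] by auto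
      have b2: "\<bar>?b - ?a\<bar> \<le> integral {t i..t (Suc i)} (\<lambda>x. \<bar>h x\<bar>)"
        using integral_norm_bound_integral[of h "{t i..t (Suc i)}" "\<lambda>x. \<bar>h x\<bar>"]
          integrable_on_subinterval[OF hi(1) I] integrable_on_subinterval[OF hi(2) I] dif[OF i]
        by simp
      have "\<bar>(F ?b - F ?a) - F' ?a * integral {t i..t (Suc i)} h\<bar> \<le> M * (?b - ?a)^2"
        using taylor_lip[OF Fd lip, of ?b ?a] dif[OF i] by simp
      also have "\<dots> = M * (\<bar>?b - ?a\<bar> * \<bar>?b - ?a\<bar>)" by (simp add: power2_eq_square)
      also have "\<dots> \<le> M * (\<eta> * integral {t i..t (Suc i)} (\<lambda>x. \<bar>h x\<bar>))"
        using b1 b2 M by (intro mult_left_mono mult_mono) auto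
      finally show ?thesis by (simp add: mult.assoc)
    qed
    have est2: "\<bar>(F (\<phi> s) - F (\<phi> 0)) - (\<Sum>i<n. F' (\<phi> (t i)) * integral {t i..t (Suc i)} h)\<bar>
        \<le> (M * \<eta>) * integral {0..s} (\<lambda>x. \<bar>h x\<bar>)"
    proof -
      have "\<bar>(F (\<phi> s) - F (\<phi> 0)) - (\<Sum>i<n. F' (\<phi> (t i)) * integral {t i..t (Suc i)} h)\<bar>
          = \<bar>\<Sum>i<n. (F (\<phi> (t (Suc i))) - F (\<phi> (t i))) - F' (\<phi> (t i)) * integral {t i..t (Suc i)} h\<bar>"
        unfolding tele by (simp add: sum_subtractf)
      also have "\<dots> \<le> (\<Sum>i<n. \<bar>(F (\<phi> (t (Suc i))) - F (\<phi> (t i))) - F' (\<phi> (t i)) * integral {t i..t (Suc i)} h\<bar>)"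
        by (rule sum_abs)
      also have "\<dots> \<le> (\<Sum>i<n. M * \<eta> * integral {t i..t (Suc i)} (\<lambda>x. \<bar>h x\<bar>))"
        by (rule sum_mono, rule piece, simp)
      also have "\<dots> = (M * \<eta>) * integral {0..s} (\<lambda>x. \<bar>h x\<bar>)"
        using integral_partition[OF tp(1), of "\<lambda>x. \<bar>h x\<bar>" n, unfolded tp(2,3), OF hs(2)]
        by (simp add: sum_distrib_left)
      finally show ?thesis .
    qed
    show "\<bar>F (\<phi> s) - F (\<phi> 0) - integral {0..s} (\<lambda>x. F' (\<phi> x) * h x)\<bar>
        \<le> \<eta> * (2 * M * integral {0..s} (\<lambda>x. \<bar>h x\<bar>))"
      using est1 est2 by (simp add: algebra_simps)
  qed
  then show ?thesis by simp
qed

definition phid :: "real \<Rightarrow> real" where "phid t = 2 * sqrt (1 - cos t)"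

lemma phid_eq: "(\<lambda>t. 2 * sqrt (1 - cos t)) = phid" by (rule ext) (simp add: phid_def)

lemma phid_sin: "phid t = 2 * sqrt 2 * \<bar>sin (t / 2)\<bar>"
proof -
  have "cos t = cos (2 * (t / 2))" by simp
  also have "\<dots> = 1 - 2 * sin (t / 2) ^ 2" by (rule cos_double_sin)
  finally have "1 - cos t = 2 * sin (t / 2) ^ 2" by simp
  then show ?thesis by (simp add: phid_def real_sqrt_mult)
qed

lemma phid_cont: "continuous_on S phid"
  unfolding phid_def by (intro continuous_intros)

lemma phid_nonneg: "phid t \<ge> 0" by (simp add: phid_def)

lemma phid_le: "phid t \<le> 2 * sqrt 2"
proof -
  have "\<bar>sin (t / 2)\<bar> \<le> 1" by (rule abs_sin_le_one)
  then show ?thesis unfolding phid_sin by (simp add: mult_left_le)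
qed

lemma sin_lip: fixes a b :: real shows "\<bar>sin a - sin b\<bar> \<le> \<bar>a - b\<bar>"
proof -
  have "\<bar>sin a - sin b\<bar> = 2 * \<bar>sin ((a - b) / 2)\<bar> * \<bar>cos ((a + b) / 2)\<bar>"
    by (simp only: sin_diff_sin abs_mult abs_numeral)
  also have "\<dots> \<le> 2 * \<bar>(a - b) / 2\<bar> * 1"
    by (intro mult_mono mult_left_mono abs_sin_x_le_abs_x abs_cos_le_one) auto
  finally show ?thesis by simp
qed

lemma sqrt2_le: "sqrt 2 \<le> (2::real)"
proof -
  have "sqrt 2 \<le> sqrt (2^2::real)" by (rule real_sqrt_le_mono) simp
  then show ?thesis by simp
qed

lemma phid_lip: "\<bar>phid x - phid y\<bar> \<le> 2 * \<bar>x - y\<bar>"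
proof -
  have "\<bar>phid x - phid y\<bar> = 2 * sqrt 2 * \<bar>\<bar>sin (x / 2)\<bar> - \<bar>sin (y / 2)\<bar>\<bar>"
    unfolding phid_sin by (simp add: abs_mult flip: right_diff_distrib)
  also have "\<dots> \<le> 2 * sqrt 2 * \<bar>x / 2 - y / 2\<bar>"
    using sin_lip[of "x/2" "y/2"] by (intro mult_left_mono) auto
  also have "\<dots> = sqrt 2 * \<bar>x - y\<bar>"
  proof -
    have "\<bar>x / 2 - y / 2\<bar> = \<bar>x - y\<bar> / 2" by (cases "x \<le> y") auto
    then show ?thesis by simp
  qed
  also have "\<dots> \<le> 2 * \<bar>x - y\<bar>"
    by (intro mult_right_mono sqrt2_le) auto
  finally show ?thesis .
qed

lemma Phi_alt:
  assumes "a \<le> 0" "a \<le> r"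
  shows "Phi r = integral {a..r} phid - integral {a..0} phid"
proof (cases "0 \<le> r")
  case True
  have "integral {a..0} phid + integral {0..r} phid = integral {a..r} phid"
    by (rule Henstock_Kurzweil_Integration.integral_combine)
      (use assms True in \<open>auto intro: integrable_continuous_interval phid_cont\<close>)
  then show ?thesis using True by (simp add: Phi_def phid_eq)
next
  case False
  have "integral {a..r} phid + integral {r..0} phid = integral {a..0} phid"
    by (rule Henstock_Kurzweil_Integration.integral_combine)
      (use assms False in \<open>auto intro: integrable_continuous_interval phid_cont\<close>)
  then show ?thesis using False by (simp add: Phi_def phid_eq)
qed

lemma Phi_0 [simp]: "Phi 0 = 0" by (simp add: Phi_def)

lemma Phi_deriv: "(Phi has_real_derivative phid x) (at x)"
proof -
  define a where "a = - \<bar>x\<bar> - 1"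
  define b where "b = \<bar>x\<bar> + 1"
  have xin: "x \<in> {a<..<b}" by (auto simp: a_def b_def)
  have d1: "((\<lambda>u. integral {a..u} phid) has_real_derivative phid x) (at x within {a..b})"
    by (rule integral_has_real_derivative) (use xin in \<open>auto intro: phid_cont\<close>)
  have "at x within {a..b} = at x"
    by (rule at_within_interior) (use xin in auto)
  then have d2: "((\<lambda>u. integral {a..u} phid - integral {a..0} phid) has_real_derivative phid x) (at x)"
    using d1 by (auto intro!: derivative_eq_intros)
  show ?thesis
  proof (rule has_field_derivative_transform_within_open[OF d2 _ xin])
    fix y assume "y \<in> {a<..<b}"
    then show "integral {a..y} phid - integral {a..0} phid = Phi y"
      using Phi_alt[of a y] by (auto simp: a_def)
  qed auto
qed

lemma Phi_2pi: "Phi (2 * pi) = 8 * sqrt 2"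
proof -
  define G where "G = (\<lambda>t. - 4 * sqrt 2 * cos (t / 2))"
  have "(phid has_integral (G (2 * pi) - G 0)) {0..2 * pi}"
  proof (rule fundamental_theorem_of_calculus)
    fix t assume t: "t \<in> {0..2 * pi}"
    have "sin (t / 2) \<ge> 0" using t by (intro sin_ge_zero) auto
    then have pe: "phid t = 2 * sqrt 2 * sin (t / 2)" by (simp add: phid_sin)
    have "(G has_real_derivative 2 * sqrt 2 * sin (t / 2)) (at t)"
      unfolding G_def by (auto intro!: derivative_eq_intros)
    then show "(G has_vector_derivative phid t) (at t within {0..2 * pi})"
      by (simp add: pe has_real_derivative_iff_has_vector_derivative[symmetric] has_field_derivative_at_within)
  qed simp
  then have "integral {0..2 * pi} phid = 8 * sqrt 2"
    by (simp add: G_def integral_unique)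
  then show ?thesis by (simp add: Phi_def phid_eq)
qed

lemma Phi_period: "Phi (x + 2 * pi) = Phi x + 8 * sqrt 2"
proof -
  define D where "D = (\<lambda>x. Phi (x + 2 * pi) - Phi x)"
  have "\<forall>x. (D has_real_derivative 0) (at x)"
  proof
    fix x
    have g: "((\<lambda>x. x + 2 * pi) has_real_derivative 1) (at x)"
      by (auto intro!: derivative_eq_intros)
    have "(D has_real_derivative phid (x + 2 * pi) * 1 - phid x) (at x)"
      unfolding D_def by (rule DERIV_diff[OF DERIV_chain2[OF Phi_deriv g] Phi_deriv])
    moreover have "phid (x + 2 * pi) = phid x" by (simp add: phid_def)
    ultimately show "(D has_real_derivative 0) (at x)" by simp
  qed
  then have "D x = D 0" by (rule DERIV_isconst_all)
  then have "Phi (x + 2 * pi) - Phi x = Phi (0 + 2 * pi) - Phi 0" unfolding D_def .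
  moreover have "Phi (0 + 2 * pi) = 8 * sqrt 2" using Phi_2pi by simp
  ultimately show ?thesis using Phi_0 by linarith
qed

lemma Phi_period_nat: "Phi (x + 2 * pi * real n) = Phi x + 8 * sqrt 2 * real n"
proof (induction n)
  case 0 then show ?case by simp
next
  case (Suc n)
  have "Phi (x + 2 * pi * real (Suc n)) = Phi ((x + 2 * pi * real n) + 2 * pi)"
    by (simp add: algebra_simps)
  also have "\<dots> = Phi (x + 2 * pi * real n) + 8 * sqrt 2" by (rule Phi_period)
  also have "\<dots> = Phi x + 8 * sqrt 2 * real (Suc n)" using Suc by (simp add: algebra_simps)
  finally show ?case .
qed

lemma Phi_period_int: "Phi (x + 2 * pi * of_int k) = Phi x + 8 * sqrt 2 * of_int k"
proof (cases "k \<ge> 0")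
  case True
  define n where "n = nat k"
  have k: "of_int k = real n" using True by (simp add: n_def)
  show ?thesis using Phi_period_nat[of x n] unfolding k .
next
  case False
  define n where "n = nat (- k)"
  have k: "of_int k = - real n" using False by (simp add: n_def)
  have e: "x + 2 * pi * (- real n) + 2 * pi * real n = x" by simp
  have "Phi (x + 2 * pi * (- real n) + 2 * pi * real n) = Phi (x + 2 * pi * (- real n)) + 8 * sqrt 2 * real n"
    by (rule Phi_period_nat)
  then have "Phi x = Phi (x + 2 * pi * (- real n)) + 8 * sqrt 2 * real n" unfolding e .
  then show ?thesis unfolding k by simp
qed

definition cc :: real where "cc = 2 * pi / (8 * sqrt 2)"
definition gf :: "real \<Rightarrow> real" where "gf x = cc * Phi x - x"

lemma cc8: "cc * (8 * sqrt 2) = 2 * pi" by (simp add: cc_def)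
lemma cc_pos: "cc > 0" by (simp add: cc_def)
lemma cc2: "cc * (2 * sqrt 2) = pi / 2" by (simp add: cc_def)

lemma gf_period: "gf (x + 2 * pi * of_int k) = gf x"
proof -
  have P: "Phi (x + 2 * pi * of_int k) = Phi x + 8 * sqrt 2 * of_int k" by (rule Phi_period_int)
  have "cc * (Phi x + 8 * sqrt 2 * of_int k) = cc * Phi x + (cc * (8 * sqrt 2)) * of_int k"
    by (simp add: algebra_simps)
  then have "cc * (Phi x + 8 * sqrt 2 * of_int k) = cc * Phi x + 2 * pi * of_int k" unfolding cc8 .
  then show ?thesis unfolding gf_def P by linarith
qed

lemma Phi_lin: "\<bar>Phi x\<bar> \<le> 2 * sqrt 2 * \<bar>x\<bar>"
proof -
  have gen: "\<bar>Phi v - Phi u\<bar> \<le> 2 * sqrt 2 * (v - u)" if "u < v" for u v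
  proof -
    obtain z where z: "Phi v - Phi u = (v - u) * phid z"
      using MVT2[OF \<open>u < v\<close>, of Phi phid] Phi_deriv by blast
    have "\<bar>Phi v - Phi u\<bar> = (v - u) * phid z" using z that phid_nonneg[of z] by (simp add: abs_mult)
    also have "\<dots> \<le> (v - u) * (2 * sqrt 2)" using that phid_le[of z] by (intro mult_left_mono) auto
    finally show ?thesis by (simp add: mult.commute)
  qed
  consider "0 < x" | "x = 0" | "x < 0" by linarith
  then show ?thesis
  proof cases
    case 1 then show ?thesis using gen[of 0 x] by simp
  next
    case 2 then show ?thesis by simp
  next
    case 3 then show ?thesis using gen[of x 0] by simp
  qed
qed

lemma gf_lin: "\<bar>gf x\<bar> \<le> 3 * \<bar>x\<bar>"
proof -
  have "\<bar>cc * Phi x\<bar> = cc * \<bar>Phi x\<bar>" using cc_pos by (simp add: abs_mult)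
  then have "\<bar>gf x\<bar> \<le> cc * \<bar>Phi x\<bar> + \<bar>x\<bar>"
    using abs_triangle_ineq4[of "cc * Phi x" x] unfolding gf_def by linarith
  also have "\<dots> \<le> cc * (2 * sqrt 2 * \<bar>x\<bar>) + \<bar>x\<bar>"
    using Phi_lin cc_pos by (intro add_right_mono mult_left_mono) auto
  also have "\<dots> = (pi / 2 + 1) * \<bar>x\<bar>" using cc2 by (simp add: algebra_simps)
  also have "\<dots> \<le> 3 * \<bar>x\<bar>" using pi_less_4 by (intro mult_right_mono) auto
  finally show ?thesis .
qed

lemma cos_lower: fixes y :: real assumes "0 \<le> y" shows "1 - y^2 / 2 \<le> cos y"
proof -
  let ?v = "\<lambda>y. cos y - 1 + y^2 / 2"
  have "?v 0 \<le> ?v y"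
  proof (rule DERIV_nonneg_imp_nondecreasing[OF assms])
    fix x assume x: "0 \<le> x" "x \<le> y"
    have "(?v has_real_derivative (- sin x + x)) (at x)"
      by (auto intro!: derivative_eq_intros)
    moreover have "- sin x + x \<ge> 0" using sin_x_le_x[OF x(1)] by simp
    ultimately show "\<exists>d. (?v has_real_derivative d) (at x) \<and> d \<ge> 0" by blast
  qed
  then show ?thesis by simp
qed

lemma sin_lower3: fixes y :: real assumes "0 \<le> y" shows "y - y^3 / 6 \<le> sin y"
proof -
  let ?u = "\<lambda>y. sin y - y + y^3 / 6"
  have "?u 0 \<le> ?u y"
  proof (rule DERIV_nonneg_imp_nondecreasing[OF assms])
    fix x assume x: "0 \<le> x" "x \<le> y"
    have "(?u has_real_derivative (cos x - 1 + x^2 / 2)) (at x)"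
      by (auto intro!: derivative_eq_intros simp: power2_eq_square)
    moreover have "cos x - 1 + x^2 / 2 \<ge> 0" using cos_lower[OF x(1)] by simp
    ultimately show "\<exists>d. (?u has_real_derivative d) (at x) \<and> d \<ge> 0" by blast
  qed
  then show ?thesis by simp
qed

lemma sin_lower: fixes y :: real assumes "0 \<le> y" "y \<le> 2" shows "y / 3 \<le> sin y"
proof -
  have "y^3 = y * y^2" by (simp add: power3_eq_cube power2_eq_square mult.assoc)
  also have "\<dots> \<le> y * 4"
  proof -
    have "y^2 \<le> 2^2" using assms by (intro power_mono) auto
    then show ?thesis using assms by (intro mult_left_mono) auto
  qed
  finally have "y^3 \<le> 4 * y" by simp
  then show ?thesis using sin_lower3[OF assms(1)] by simp
qed

lemma cmod_cis: "cmod (cis x - 1) = 2 * \<bar>sin (x / 2)\<bar>"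
proof -
  have "(cmod (cis x - 1))^2 = (cos x - 1)^2 + (sin x)^2"
    by (simp add: cmod_power2)
  also have "\<dots> = 2 - 2 * cos x" by (simp add: power2_diff sin_squared_eq algebra_simps)
  also have "cos x = 1 - 2 * sin (x / 2) ^ 2" using cos_double_sin[of "x / 2"] by simp
  finally have "(cmod (cis x - 1))^2 = (2 * \<bar>sin (x / 2)\<bar>)^2" by (simp add: power_mult_distrib)
  then show ?thesis by (rule power2_eq_imp_eq) auto
qed

lemma small_cis: assumes "\<bar>x\<bar> \<le> pi" shows "\<bar>x\<bar> \<le> 3 * cmod (cis x - 1)"
proof -
  have y: "0 \<le> \<bar>x\<bar> / 2" "\<bar>x\<bar> / 2 \<le> 2" using assms pi_less_4 by auto
  have "\<bar>sin (x / 2)\<bar> = sin (\<bar>x\<bar> / 2)"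
  proof (cases "x \<ge> 0")
    case True
    then have "sin (x / 2) \<ge> 0" using assms by (intro sin_ge_zero) auto
    then show ?thesis using True by simp
  next
    case False
    then have "sin (- x / 2) \<ge> 0" using assms by (intro sin_ge_zero) auto
    then show ?thesis using False by simp
  qed
  then have "\<bar>x\<bar> / 6 \<le> \<bar>sin (x / 2)\<bar>" using sin_lower[OF y] by simp
  then show ?thesis by (simp add: cmod_cis)
qed

lemma cis_period: "cis (y + 2 * pi * of_int k) = cis y"
proof -
  have "cis (y + 2 * pi * of_int k) = cis y * cis (2 * pi * of_int k)" by (rule cis_mult[symmetric])
  also have "cis (2 * pi * of_int k) = 1" by (rule cis_multiple_2pi) simp
  finally show ?thesis by simp
qed

lemma gf_bound: "\<bar>gf x\<bar> \<le> 9 * cmod (cis x - 1)"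
proof -
  define k where "k = \<lfloor>(x + pi) / (2 * pi)\<rfloor>"
  define y where "y = x - 2 * pi * of_int k"
  have f: "of_int k \<le> (x + pi) / (2 * pi)" "(x + pi) / (2 * pi) < of_int k + 1"
    unfolding k_def by linarith+
  have "2 * pi * of_int k \<le> x + pi" "x + pi < 2 * pi * of_int k + 2 * pi"
    using f pi_gt_zero by (simp_all add: field_simps)
  then have yb: "\<bar>y\<bar> \<le> pi" unfolding y_def by auto
  have xy: "x = y + 2 * pi * of_int k" by (simp add: y_def)
  have "\<bar>gf x\<bar> = \<bar>gf y\<bar>" unfolding xy gf_period ..
  also have "\<dots> \<le> 3 * \<bar>y\<bar>" by (rule gf_lin)
  also have "\<dots> \<le> 3 * (3 * cmod (cis y - 1))" using small_cis[OF yb] by simp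
  also have "cis y = cis x" unfolding xy cis_period ..
  finally show ?thesis by simp
qed

lemma theta_deriv:
  fixes g1 g2 :: "real \<Rightarrow> complex" and \<theta> :: "real \<Rightarrow> real"
  assumes cont: "continuous_on {0..l} \<theta>" and lift: "\<forall>s\<in>{0..l}. g1 s = cis (\<theta> s)"
    and der: "\<forall>s\<in>{0..l}. (g1 has_vector_derivative g2 s) (at s within {0..l})"
    and s: "s \<in> {0..l}"
  shows "(\<theta> has_real_derivative Im (g2 s * cnj (g1 s))) (at s within {0..l})"
proof -
  define w where "w = cnj (g1 s)"
  have w1: "g1 s * w = 1" using lift s by (simp add: w_def cis_cnj cis_mult)
  have d1: "((\<lambda>t. g1 t * w) has_vector_derivative g2 s * w) (at s within {0..l})"
    using bounded_linear.has_vector_derivative[OF bounded_linear_mult_left der[rule_format, OF s]] .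
  have "(Ln has_field_derivative inverse 1) (at 1)" by (rule has_field_derivative_Ln) simp
  then have d2: "(Ln has_field_derivative 1) (at ((\<lambda>t. g1 t * w) s) within (\<lambda>t. g1 t * w) ` {0..l})"
    using w1 by (simp add: has_field_derivative_at_within)
  have d3: "((Ln \<circ> (\<lambda>t. g1 t * w)) has_vector_derivative (g2 s * w * 1)) (at s within {0..l})"
    by (rule field_vector_diff_chain_within[OF d1 d2])
  have d4: "((\<lambda>t. \<theta> s + Im ((Ln \<circ> (\<lambda>t. g1 t * w)) t)) has_vector_derivative (0 + Im (g2 s * w))) (at s within {0..l})"
    using has_vector_derivative_add[OF has_vector_derivative_const
        bounded_linear.has_vector_derivative[OF bounded_linear_Im d3]] by simp
  obtain d where dpos: "d > 0" and dd: "\<And>t. t \<in> {0..l} \<Longrightarrow> dist t s < d \<Longrightarrow> dist (\<theta> t) (\<theta> s) < pi"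
    using cont s pi_gt_zero unfolding continuous_on_iff by metis
  have eq: "\<theta> s + Im ((Ln \<circ> (\<lambda>t. g1 t * w)) t) = \<theta> t" if t: "t \<in> {0..l}" "dist t s < d" for t
  proof -
    have b: "\<bar>\<theta> t - \<theta> s\<bar> < pi" using dd[OF t] by (simp add: dist_real_def)
    have "g1 t * w = cis (\<theta> t - \<theta> s)" using lift s t by (simp add: w_def cis_cnj cis_mult)
    also have "\<dots> = exp (\<i> * complex_of_real (\<theta> t - \<theta> s))" by (rule cis_conv_exp)
    finally have "Ln (g1 t * w) = \<i> * complex_of_real (\<theta> t - \<theta> s)"
      using b by (simp add: Ln_exp)
    then show ?thesis by simp
  qed
  have "(\<theta> has_vector_derivative (0 + Im (g2 s * w))) (at s within {0..l})"
    by (rule has_vector_derivative_transform_within[OF d4 dpos s]) (use eq in auto)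
  then show ?thesis by (simp add: w_def has_real_derivative_iff_has_vector_derivative)
qed

lemma theta_ftc:
  fixes \<theta> \<theta>' :: "real \<Rightarrow> real"
  assumes d: "\<And>s. s \<in> {0..l} \<Longrightarrow> (\<theta> has_real_derivative \<theta>' s) (at s within {0..l})"
    and s: "s \<in> {0..l}"
  shows "\<theta> s = \<theta> 0 + integral {0..s} \<theta>'"
proof -
  have "(\<theta>' has_integral (\<theta> s - \<theta> 0)) {0..s}"
  proof (rule fundamental_theorem_of_calculus)
    show "0 \<le> s" using s by simp
    fix x assume x: "x \<in> {0..s}"
    then have "x \<in> {0..l}" using s by auto
    then have "(\<theta> has_vector_derivative \<theta>' x) (at x within {0..l})"
      using d by (simp add: has_real_derivative_iff_has_vector_derivative)
    then show "(\<theta> has_vector_derivative \<theta>' x) (at x within {0..s})"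
      by (rule has_vector_derivative_within_subset) (use s in auto)
  qed
  then show ?thesis by (simp add: integral_unique)
qed

lemma flat_testD:
  assumes "flat_test l \<psi>" "l \<ge> 0"
  obtains L where "L \<ge> 0" "L \<le> 1" "L-lipschitz_on {0..l} \<psi>" "\<psi> 0 = \<psi> l"
    "\<And>s. s \<in> {0..l} \<Longrightarrow> \<bar>\<psi> s\<bar> \<le> 1" "continuous_on {0..l} \<psi>"
proof -
  obtain L where L: "L \<ge> 0" "L-lipschitz_on {0..l} \<psi>" "\<forall>s\<in>{0..l}. \<bar>\<psi> s\<bar> + L \<le> 1" "\<psi> 0 = \<psi> l"
    using assms(1) unfolding flat_test_def by blast
  have "\<bar>\<psi> 0\<bar> + L \<le> 1" using L(3) assms(2) by auto
  then have "L \<le> 1" by simp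
  moreover have "\<bar>\<psi> s\<bar> \<le> 1" if s: "s \<in> {0..l}" for s
  proof -
    have "\<bar>\<psi> s\<bar> + L \<le> 1" using L(3) s by blast
    then show ?thesis using L(1) by linarith
  qed
  moreover have "continuous_on {0..l} \<psi>" by (rule lipschitz_on_continuous_on[OF L(2)])
  ultimately show ?thesis using that L by blast
qed

lemma ai_parts:
  fixes g :: "real \<Rightarrow> real"
  assumes "g absolutely_integrable_on S"
  shows "g integrable_on S" "(\<lambda>x. \<bar>g x\<bar>) integrable_on S"
  using assms unfolding absolutely_integrable_on_def by auto

lemma prod_ai:
  fixes \<psi> g :: "real \<Rightarrow> real"
  assumes c: "continuous_on {0..l} \<psi>" and g: "g absolutely_integrable_on {0..l}"
  shows "(\<lambda>s. \<psi> s * g s) absolutely_integrable_on {0..l}"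
proof (rule absolutely_integrable_bounded_measurable_product_real[OF _ _ _ g])
  show "\<psi> \<in> borel_measurable (lebesgue_on {0..l})"
    by (rule continuous_imp_measurable_on_sets_lebesgue[OF c]) simp
  show "{0..l} \<in> sets lebesgue" by simp
  show "bounded (\<psi> ` {0..l})"
    by (rule compact_imp_bounded[OF compact_continuous_image[OF c compact_Icc]])
qed

lemma weak_deriv_wderiv:
  assumes "has_weak_deriv l f g"
  shows "has_weak_deriv l f (wderiv l f)"
  unfolding wderiv_def by (rule someI[of "has_weak_deriv l f", OF assms])

lemma weak_unique:
  fixes f g1 g2 \<psi> :: "real \<Rightarrow> real"
  assumes l: "l \<ge> 0" and w1: "has_weak_deriv l f g1" and w2: "has_weak_deriv l f g2"
    and L: "L \<ge> 0" "L-lipschitz_on {0..l} \<psi>" and p0: "\<psi> 0 = \<psi> l"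
  shows "integral {0..l} (\<lambda>s. \<psi> s * g1 s) = integral {0..l} (\<lambda>s. \<psi> s * g2 s)"
proof -
  have a1: "g1 absolutely_integrable_on {0..l}" and a2: "g2 absolutely_integrable_on {0..l}"
    using w1 w2 unfolding has_weak_deriv_def by blast+
  have c: "continuous_on {0..l} \<psi>" by (rule lipschitz_on_continuous_on[OF L(2)])
  define h where "h = (\<lambda>s. g1 s - g2 s)"
  have ah: "h absolutely_integrable_on {0..l}" unfolding h_def using a1 a2 by (rule set_integral_diff)
  have p1: "(\<lambda>s. \<psi> s * g1 s) integrable_on {0..l}" "(\<lambda>s. \<psi> s * g2 s) integrable_on {0..l}"
    using ai_parts(1)[OF prod_ai[OF c a1]] ai_parts(1)[OF prod_ai[OF c a2]] by auto
  have hint: "\<forall>s\<in>{0..l}. (0::real) = 0 + integral {0..s} h"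
  proof
    fix s assume s: "s \<in> {0..l}"
    have i1: "g1 integrable_on {0..s}" "g2 integrable_on {0..s}"
      using ai_parts(1)[OF a1] ai_parts(1)[OF a2] s
      by (auto intro: integrable_on_subinterval)
    have "f s = f 0 + integral {0..s} g1" "f s = f 0 + integral {0..s} g2"
      using w1 w2 s unfolding has_weak_deriv_def by blast+
    then show "(0::real) = 0 + integral {0..s} h" unfolding h_def using integral_diff[OF i1] by simp
  qed
  have "\<bar>integral {0..l} (\<lambda>x. \<psi> x * h x)\<bar> \<le> L * integral {0..l} (\<lambda>x. \<bar>(\<lambda>_. 0::real) x\<bar>)"
    by (rule ibp_bound[OF l L(1) ai_parts[OF ah] ai_parts(1)[OF prod_ai[OF c ah]] hint _ L(2) p0]) simp
  then have "integral {0..l} (\<lambda>x. \<psi> x * h x) = 0" by simp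
  moreover have "integral {0..l} (\<lambda>x. \<psi> x * h x) = integral {0..l} (\<lambda>s. \<psi> s * g1 s) - integral {0..l} (\<lambda>s. \<psi> s * g2 s)"
    unfolding h_def using integral_diff[OF p1] by (simp add: right_diff_distrib)
  ultimately show ?thesis by simp
qed

lemma cis_eq_imp:
  assumes "cis a = cis b"
  obtains k :: int where "a = b + 2 * pi * of_int k"
proof -
  have "exp (\<i> * complex_of_real a) = exp (\<i> * complex_of_real b)"
    using assms by (simp add: cis_conv_exp)
  then obtain n :: int where n: "\<i> * complex_of_real a = \<i> * complex_of_real b + (of_int (2 * n) * pi) * \<i>"
    unfolding exp_eq by blast
  have "a = Im (\<i> * complex_of_real a)" by simp
  also have "\<dots> = Im (\<i> * complex_of_real b + (of_int (2 * n) * pi) * \<i>)" using n by (rule arg_cong)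
  also have "\<dots> = b + 2 * pi * of_int n" by simp
  finally show ?thesis by (rule that)
qed

lemma Phi_cont: "continuous_on S Phi"
  by (rule continuous_at_imp_continuous_on) (use DERIV_isCont[OF Phi_deriv] in auto)

lemma gf_cont: "continuous_on S gf"
  unfolding gf_def by (intro continuous_intros Phi_cont)

lemma eps_main:
  fixes T \<theta> \<theta>d \<psi> :: "real \<Rightarrow> real"
  assumes l: "l > 0"
    and TH: "H1 l T"
    and thw: "has_weak_deriv l \<theta> \<theta>d"
    and per: "cis (T 0) = cis (T l)" "cis (\<theta> 0) = cis (\<theta> l)"
    and ft: "flat_test l \<psi>"
  shows "\<bar>pair_density l (\<lambda>s. 2 * pi / (8 * sqrt 2) * wderiv l (\<lambda>t. Phi (T t - \<theta> t)) s
            - wderiv l (\<lambda>t. T t - \<theta> t) s) \<psi>\<bar> \<le> integral {0..l} (\<lambda>x. \<bar>gf (T x - \<theta> x)\<bar>)"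
    and "pair_density l (\<lambda>s. wderiv l T s - wderiv l \<theta> s) \<psi> = pair_density l (wderiv l (\<lambda>t. T t - \<theta> t)) \<psi>"
    and "pair_density l (\<lambda>s. 2 * pi / (8 * sqrt 2) * wderiv l (\<lambda>t. Phi (T t - \<theta> t)) s) \<psi>
        = pair_density l (\<lambda>s. 2 * pi / (8 * sqrt 2) * wderiv l (\<lambda>t. Phi (T t - \<theta> t)) s
            - wderiv l (\<lambda>t. T t - \<theta> t) s) \<psi> + pair_density l (\<lambda>s. wderiv l T s - wderiv l \<theta> s) \<psi>"
    and "\<bar>pair_density l (\<lambda>s. wderiv l T s - wderiv l \<theta> s) \<psi>\<bar>
        \<le> integral {0..l} (\<lambda>s. \<bar>wderiv l T s - wderiv l \<theta> s\<bar>)"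
    and "(\<lambda>s. wderiv l T s - wderiv l \<theta> s) absolutely_integrable_on {0..l}"
proof -
  have l0: "l \<ge> 0" using l by simp
  obtain gT where "has_weak_deriv l T gT" using TH unfolding H1_def by blast
  then have wT: "has_weak_deriv l T (wderiv l T)" by (rule weak_deriv_wderiv)
  have wth: "has_weak_deriv l \<theta> (wderiv l \<theta>)" using thw by (rule weak_deriv_wderiv)
  define \<phi> where "\<phi> = (\<lambda>t. T t - \<theta> t)"
  define h where "h = (\<lambda>s. wderiv l T s - wderiv l \<theta> s)"
  have aT: "wderiv l T absolutely_integrable_on {0..l}" and ath: "wderiv l \<theta> absolutely_integrable_on {0..l}"
    using wT wth unfolding has_weak_deriv_def by blast+
  have ah: "h absolutely_integrable_on {0..l}" unfolding h_def using aT ath by (rule set_integral_diff)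
  have hi: "h integrable_on {0..l}" "(\<lambda>x. \<bar>h x\<bar>) integrable_on {0..l}" using ai_parts[OF ah] by auto
  have pdef: "\<forall>s\<in>{0..l}. \<phi> s = \<phi> 0 + integral {0..s} h"
  proof
    fix s assume s: "s \<in> {0..l}"
    have i1: "wderiv l T integrable_on {0..s}" "wderiv l \<theta> integrable_on {0..s}"
      using ai_parts(1)[OF aT] ai_parts(1)[OF ath] s by (auto intro: integrable_on_subinterval)
    have e1: "T s = T 0 + integral {0..s} (wderiv l T)" "\<theta> s = \<theta> 0 + integral {0..s} (wderiv l \<theta>)"
      using wT wth s unfolding has_weak_deriv_def by blast+
    have "integral {0..s} h = integral {0..s} (wderiv l T) - integral {0..s} (wderiv l \<theta>)"
      unfolding h_def by (rule integral_diff[OF i1])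
    then show "\<phi> s = \<phi> 0 + integral {0..s} h" unfolding \<phi>_def using e1 by linarith
  qed
  have wphi: "has_weak_deriv l \<phi> h" unfolding has_weak_deriv_def using ah pdef by blast
  have wphi2: "has_weak_deriv l \<phi> (wderiv l \<phi>)" using wphi by (rule weak_deriv_wderiv)
  have pc: "continuous_on {0..l} \<phi>" by (rule prim_cont[OF hi(1) pdef])
  define hP where "hP = (\<lambda>x. phid (\<phi> x) * h x)"
  have pdc: "continuous_on {0..l} (\<lambda>x. phid (\<phi> x))"
    using continuous_on_compose[OF pc phid_cont] by (simp add: o_def)
  have ahP: "hP absolutely_integrable_on {0..l}" unfolding hP_def by (rule prod_ai[OF pdc ah])
  have hPi: "hP integrable_on {0..l}" using ai_parts[OF ahP] by auto
  have Pdef: "\<forall>s\<in>{0..l}. Phi (\<phi> s) = Phi (\<phi> 0) + integral {0..s} hP"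
  proof
    fix s assume s: "s \<in> {0..l}"
    show "Phi (\<phi> s) = Phi (\<phi> 0) + integral {0..s} hP"
      unfolding hP_def
      by (rule chain_rule_weak[OF hi pdef Phi_deriv phid_lip _ s]) (rule ai_parts(1)[OF ahP[unfolded hP_def]])
  qed
  have wP: "has_weak_deriv l (\<lambda>t. Phi (\<phi> t)) hP" unfolding has_weak_deriv_def using ahP Pdef by blast
  have wP2: "has_weak_deriv l (\<lambda>t. Phi (\<phi> t)) (wderiv l (\<lambda>t. Phi (\<phi> t)))" using wP by (rule weak_deriv_wderiv)
  obtain L where L: "L \<ge> 0" "L \<le> 1" "L-lipschitz_on {0..l} \<psi>" "\<psi> 0 = \<psi> l"
    "\<And>s. s \<in> {0..l} \<Longrightarrow> \<bar>\<psi> s\<bar> \<le> 1" and psic: "continuous_on {0..l} \<psi>"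
    using flat_testD[OF ft l0] by blast
  define c where "c = 2 * pi / (8 * sqrt 2)"
  have c_cc: "c = cc" by (simp add: c_def cc_def)
  define wP' where "wP' = wderiv l (\<lambda>t. Phi (\<phi> t))"
  define wphi' where "wphi' = wderiv l \<phi>"
  have awP: "wP' absolutely_integrable_on {0..l}" and awphi: "wphi' absolutely_integrable_on {0..l}"
    using wP2 wphi2 unfolding has_weak_deriv_def wP'_def wphi'_def by blast+
  have i_wP: "(\<lambda>s. \<psi> s * wP' s) integrable_on {0..l}" by (rule ai_parts(1)[OF prod_ai[OF psic awP]])
  have i_wphi: "(\<lambda>s. \<psi> s * wphi' s) integrable_on {0..l}" by (rule ai_parts(1)[OF prod_ai[OF psic awphi]])
  have i_h: "(\<lambda>s. \<psi> s * h s) integrable_on {0..l}" by (rule ai_parts(1)[OF prod_ai[OF psic ah]])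
  have i_hP: "(\<lambda>s. \<psi> s * hP s) integrable_on {0..l}" by (rule ai_parts(1)[OF prod_ai[OF psic ahP]])
  have u1: "integral {0..l} (\<lambda>s. \<psi> s * wP' s) = integral {0..l} (\<lambda>s. \<psi> s * hP s)"
    unfolding wP'_def by (rule weak_unique[OF l0 wP2 wP L(1) L(3) L(4)])
  have u2: "integral {0..l} (\<lambda>s. \<psi> s * wphi' s) = integral {0..l} (\<lambda>s. \<psi> s * h s)"
    unfolding wphi'_def by (rule weak_unique[OF l0 wphi2 wphi L(1) L(3) L(4)])
  have lin: "integral {0..l} (\<lambda>s. \<psi> s * (c * wP' s - wphi' s))
      = c * integral {0..l} (\<lambda>s. \<psi> s * wP' s) - integral {0..l} (\<lambda>s. \<psi> s * wphi' s)"
  proof -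
    have "(\<lambda>s. \<psi> s * (c * wP' s - wphi' s)) = (\<lambda>s. c * (\<psi> s * wP' s) - \<psi> s * wphi' s)"
      by (auto simp: algebra_simps)
    then show ?thesis using integral_diff[OF integrable_on_mult_right[OF i_wP, of c] i_wphi] by simp
  qed
  have lin2: "integral {0..l} (\<lambda>s. \<psi> s * (c * hP s - h s))
      = c * integral {0..l} (\<lambda>s. \<psi> s * hP s) - integral {0..l} (\<lambda>s. \<psi> s * h s)"
  proof -
    have "(\<lambda>s. \<psi> s * (c * hP s - h s)) = (\<lambda>s. c * (\<psi> s * hP s) - \<psi> s * h s)"
      by (auto simp: algebra_simps)
    then show ?thesis using integral_diff[OF integrable_on_mult_right[OF i_hP, of c] i_h] by simp
  qed
  define H where "H = (\<lambda>x. c * hP x - h x)"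
  have aH: "H absolutely_integrable_on {0..l}" unfolding H_def
    using set_integral_diff(1)[OF set_integrable_mult_right[OF ahP, of c] ah] .
  have Gdef: "\<forall>s\<in>{0..l}. gf (\<phi> s) = gf (\<phi> 0) + integral {0..s} H"
  proof
    fix s assume s: "s \<in> {0..l}"
    have i1: "hP integrable_on {0..s}" "h integrable_on {0..s}"
      using hPi hi(1) s by (auto intro: integrable_on_subinterval)
    have "integral {0..s} H = c * integral {0..s} hP - integral {0..s} h"
      unfolding H_def using integral_diff[OF integrable_on_mult_right[OF i1(1), of c] i1(2)] by simp
    moreover have "Phi (\<phi> s) = Phi (\<phi> 0) + integral {0..s} hP" using Pdef s by blast
    moreover have "\<phi> s = \<phi> 0 + integral {0..s} h" using pdef s by blast
    ultimately show "gf (\<phi> s) = gf (\<phi> 0) + integral {0..s} H"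
      unfolding gf_def c_cc[symmetric] by (simp add: algebra_simps)
  qed
  have Gper: "gf (\<phi> l) = gf (\<phi> 0)"
  proof -
    have "cis (\<phi> l) = cis (T l) / cis (\<theta> l)" by (simp add: \<phi>_def cis_divide)
    also have "\<dots> = cis (T 0) / cis (\<theta> 0)" using per by simp
    also have "\<dots> = cis (\<phi> 0)" by (simp add: \<phi>_def cis_divide)
    finally obtain k where "\<phi> l = \<phi> 0 + 2 * pi * of_int k" by (rule cis_eq_imp)
    then show ?thesis using gf_period by simp
  qed
  have Gc: "continuous_on {0..l} (\<lambda>x. gf (\<phi> x))"
    using continuous_on_compose[OF pc gf_cont] by (simp add: o_def)
  have IG: "integral {0..l} (\<lambda>x. \<bar>gf (\<phi> x)\<bar>) \<ge> 0"
    by (rule integral_nonneg) (auto intro!: integrable_continuous_interval continuous_intros Gc)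
  have "\<bar>integral {0..l} (\<lambda>x. \<psi> x * H x)\<bar> \<le> L * integral {0..l} (\<lambda>x. \<bar>gf (\<phi> x)\<bar>)"
    by (rule ibp_bound[OF l0 L(1) ai_parts[OF aH] ai_parts(1)[OF prod_ai[OF psic aH]] Gdef Gper L(3) L(4)])
  also have "\<dots> \<le> integral {0..l} (\<lambda>x. \<bar>gf (\<phi> x)\<bar>)"
    using mult_right_mono[OF L(2) IG] by simp
  finally have main: "\<bar>integral {0..l} (\<lambda>x. \<psi> x * H x)\<bar> \<le> integral {0..l} (\<lambda>x. \<bar>gf (\<phi> x)\<bar>)" .
  have pd1: "pair_density l (\<lambda>s. c * wP' s - wphi' s) \<psi> = integral {0..l} (\<lambda>x. \<psi> x * H x)"
    unfolding pair_density_def H_def using lin lin2 u1 u2 by simp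
  show "\<bar>pair_density l (\<lambda>s. 2 * pi / (8 * sqrt 2) * wderiv l (\<lambda>t. Phi (T t - \<theta> t)) s
            - wderiv l (\<lambda>t. T t - \<theta> t) s) \<psi>\<bar> \<le> integral {0..l} (\<lambda>x. \<bar>gf (T x - \<theta> x)\<bar>)"
    using main pd1 unfolding c_def wP'_def wphi'_def \<phi>_def by simp
  have pd2: "pair_density l (\<lambda>s. wderiv l T s - wderiv l \<theta> s) \<psi> = pair_density l wphi' \<psi>"
    unfolding pair_density_def using u2 by (simp add: h_def)
  then show "pair_density l (\<lambda>s. wderiv l T s - wderiv l \<theta> s) \<psi> = pair_density l (wderiv l (\<lambda>t. T t - \<theta> t)) \<psi>"
    unfolding wphi'_def \<phi>_def .
  have "pair_density l (\<lambda>s. c * wP' s) \<psi> = pair_density l (\<lambda>s. c * wP' s - wphi' s) \<psi>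
      + pair_density l (\<lambda>s. wderiv l T s - wderiv l \<theta> s) \<psi>"
    unfolding pd2 unfolding pair_density_def using lin i_wP by (simp add: algebra_simps)
  then show "pair_density l (\<lambda>s. 2 * pi / (8 * sqrt 2) * wderiv l (\<lambda>t. Phi (T t - \<theta> t)) s) \<psi>
        = pair_density l (\<lambda>s. 2 * pi / (8 * sqrt 2) * wderiv l (\<lambda>t. Phi (T t - \<theta> t)) s
            - wderiv l (\<lambda>t. T t - \<theta> t) s) \<psi> + pair_density l (\<lambda>s. wderiv l T s - wderiv l \<theta> s) \<psi>"
    unfolding c_def wP'_def wphi'_def \<phi>_def .
  have "\<bar>integral {0..l} (\<lambda>s. \<psi> s * h s)\<bar> \<le> integral {0..l} (\<lambda>s. \<bar>h s\<bar>)"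
  proof -
    have "norm (integral {0..l} (\<lambda>s. \<psi> s * h s)) \<le> integral {0..l} (\<lambda>s. \<bar>h s\<bar>)"
    proof (rule integral_norm_bound_integral[OF i_h hi(2)])
      fix x assume "x \<in> {0..l}"
      then have "\<bar>\<psi> x\<bar> \<le> 1" by (rule L(5))
      then show "norm (\<psi> x * h x) \<le> \<bar>h x\<bar>" by (simp add: abs_mult mult_left_le_one_le)
    qed
    then show ?thesis by simp
  qed
  then show "\<bar>pair_density l (\<lambda>s. wderiv l T s - wderiv l \<theta> s) \<psi>\<bar>
        \<le> integral {0..l} (\<lambda>s. \<bar>wderiv l T s - wderiv l \<theta> s\<bar>)"
    unfolding pair_density_def h_def .
  show "(\<lambda>s. wderiv l T s - wderiv l \<theta> s) absolutely_integrable_on {0..l}" using ah unfolding h_def .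
qed

lemma cmod_cis_diff: "cmod (cis (a - b) - 1) = cmod (cis a - cis b)"
proof -
  have "cis (a - b) - 1 = (cis a - cis b) / cis b"
    by (simp add: cis_divide[symmetric] diff_divide_distrib)
  then show ?thesis by (simp add: norm_divide)
qed

lemma tangent_bound:
  fixes T \<theta> :: "real \<Rightarrow> real" and g1 :: "real \<Rightarrow> complex"
  assumes l: "l > 0" and Tc: "continuous_on {0..l} T" and thc: "continuous_on {0..l} \<theta>"
    and g1c: "continuous_on {0..l} g1" and lift: "\<forall>s\<in>{0..l}. g1 s = cis (\<theta> s)"
    and e: "e > 0" and C: "C > 0"
    and bt: "integral {0..l} (\<lambda>s. (cmod (cis (T s) - g1 s))^2) \<le> C * sqrt e"
  shows "integral {0..l} (\<lambda>x. \<bar>gf (T x - \<theta> x)\<bar>) \<le> 9 * ((C + l) / 2) * sqrt (sqrt e)"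
proof -
  define \<delta> where "\<delta> = sqrt (sqrt e)"
  have dpos: "\<delta> > 0" using e by (simp add: \<delta>_def)
  have d2: "\<delta>^2 = sqrt e" using e by (simp add: \<delta>_def)
  define u where "u = (\<lambda>x. cmod (cis (T x) - g1 x))"
  have uc: "continuous_on {0..l} u" unfolding u_def
    by (intro continuous_intros Tc g1c continuous_on_compose2[OF continuous_on_cis Tc]) auto
  have u2i: "(\<lambda>x. (u x)^2) integrable_on {0..l}"
    by (intro integrable_continuous_interval continuous_intros uc)
  have Gc: "continuous_on {0..l} (\<lambda>x. \<bar>gf (T x - \<theta> x)\<bar>)"
    by (intro continuous_intros continuous_on_compose2[OF gf_cont, of _ "\<lambda>x. T x - \<theta> x"] Tc thc) auto
  have pw: "\<bar>gf (T x - \<theta> x)\<bar> \<le> (9 / (2 * \<delta>)) * (u x)^2 + 9 * \<delta> / 2" if x: "x \<in> {0..l}" for x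
  proof -
    have "cmod (cis (T x - \<theta> x) - 1) = u x" using lift x by (simp add: u_def cmod_cis_diff)
    then have a: "\<bar>gf (T x - \<theta> x)\<bar> \<le> 9 * u x" using gf_bound[of "T x - \<theta> x"] by simp
    have "0 \<le> (u x - \<delta>)^2" by simp
    then have "2 * \<delta> * u x \<le> (u x)^2 + \<delta>^2" by (simp add: power2_diff mult.commute mult.left_commute)
    then have "u x \<le> ((u x)^2 + \<delta>^2) / (2 * \<delta>)" using dpos by (simp add: le_divide_eq mult.commute)
    also have "\<dots> = (1 / (2 * \<delta>)) * (u x)^2 + \<delta> / 2" using dpos by (simp add: field_simps power2_eq_square)
    finally show ?thesis using a by simp
  qed
  have "integral {0..l} (\<lambda>x. \<bar>gf (T x - \<theta> x)\<bar>) \<le> integral {0..l} (\<lambda>x. (9 / (2 * \<delta>)) * (u x)^2 + 9 * \<delta> / 2)"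
    by (rule integral_le)
      (use pw dpos in \<open>auto intro!: integrable_continuous_interval Gc continuous_intros uc simp del: times_divide_eq_right\<close>)
  also have "\<dots> = (9 / (2 * \<delta>)) * integral {0..l} (\<lambda>x. (u x)^2) + l * (9 * \<delta> / 2)"
  proof -
    have "integral {0..l} (\<lambda>x. (9 / (2 * \<delta>)) * (u x)^2 + 9 * \<delta> / 2)
        = integral {0..l} (\<lambda>x. (9 / (2 * \<delta>)) * (u x)^2) + integral {0..l} (\<lambda>x. 9 * \<delta> / 2)"
      by (rule integral_add[OF integrable_on_mult_right[OF u2i] integrable_const_ivl])
    also have "integral {0..l} (\<lambda>x. (9 / (2 * \<delta>)) * (u x)^2) = (9 / (2 * \<delta>)) * integral {0..l} (\<lambda>x. (u x)^2)"
      by (rule integral_mult_right)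
    also have "integral {0..l} (\<lambda>x. 9 * \<delta> / 2) = l * (9 * \<delta> / 2)" using l by simp
    finally show ?thesis .
  qed
  also have "\<dots> \<le> (9 / (2 * \<delta>)) * (C * \<delta>^2) + l * (9 * \<delta> / 2)"
    using bt dpos unfolding d2 u_def by (intro add_right_mono mult_left_mono) auto
  also have "\<dots> = 9 * ((C + l) / 2) * \<delta>" using dpos by (simp add: field_simps power2_eq_square)
  finally show ?thesis unfolding \<delta>_def .
qed

lemma flat_test_zero: "flat_test l (\<lambda>_. 0)"
  unfolding flat_test_def by (intro conjI exI[of _ 0]) (auto simp: lipschitz_on_def)

lemma flat_norm_bounds:
  assumes "\<And>\<psi>. flat_test l \<psi> \<Longrightarrow> \<nu> \<psi> \<le> B" and "\<nu> (\<lambda>_. 0) = 0"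
  shows "0 \<le> flat_norm l \<nu>" "flat_norm l \<nu> \<le> B"
proof -
  let ?S = "{\<nu> \<psi> | \<psi>. flat_test l \<psi>}"
  have mem: "0 \<in> ?S" using flat_test_zero assms(2) by (metis (mono_tags, lifting) mem_Collect_eq)
  have bdd: "bdd_above ?S" using assms(1) by (auto intro!: bdd_aboveI)
  show "0 \<le> flat_norm l \<nu>" unfolding flat_norm_def by (rule cSup_upper[OF mem bdd])
  show "flat_norm l \<nu> \<le> B" unfolding flat_norm_def
    by (rule cSup_least) (use mem assms(1) in auto)
qed

lemma flat_norm_ge:
  assumes "\<And>\<psi>. flat_test l \<psi> \<Longrightarrow> \<nu> \<psi> \<le> B" and "flat_test l \<psi>"
  shows "\<nu> \<psi> \<le> flat_norm l \<nu>"
proof -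
  let ?S = "{\<nu> \<psi> | \<psi>. flat_test l \<psi>}"
  have bdd: "bdd_above ?S" using assms(1) by (auto intro!: bdd_aboveI)
  show ?thesis unfolding flat_norm_def by (rule cSup_upper[OF _ bdd]) (use assms(2) in blast)
qed

lemma atoms_bound:
  assumes "Mfin_Z l N c p" "flat_test l \<psi>" "l \<ge> 0"
  shows "\<bar>pair_atoms N c p \<psi>\<bar> \<le> 2 * pi * (\<Sum>j<N. \<bar>of_int (c j)\<bar>)"
proof -
  obtain L where "\<And>s. s \<in> {0..l} \<Longrightarrow> \<bar>\<psi> s\<bar> \<le> 1" using flat_testD[OF assms(2,3)] by blast
  moreover have "p j \<in> {0..l}" if "j < N" for j using assms(1) that unfolding Mfin_Z_def by auto
  ultimately have b: "\<bar>\<psi> (p j)\<bar> \<le> 1" if "j < N" for j using that by blast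
  have "\<bar>\<Sum>j<N. of_int (c j) * \<psi> (p j)\<bar> \<le> (\<Sum>j<N. \<bar>of_int (c j) * \<psi> (p j)\<bar>)" by (rule sum_abs)
  also have "\<dots> \<le> (\<Sum>j<N. \<bar>of_int (c j)\<bar>)"
  proof (rule sum_mono)
    fix j assume "j \<in> {..<N}"
    then have "\<bar>\<psi> (p j)\<bar> \<le> 1" using b by simp
    then show "\<bar>of_int (c j) * \<psi> (p j)\<bar> \<le> \<bar>of_int (c j)\<bar>"
      by (simp add: abs_mult mult_right_le_one_le)
  qed
  finally show ?thesis unfolding pair_atoms_def by (simp add: abs_mult)
qed

theorem lemma6p4:
  fixes l C :: real
    and \<gamma> \<gamma>' \<gamma>'' :: "real \<Rightarrow> complex" and \<theta> :: "real \<Rightarrow> real"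
    and \<gamma>e :: "real \<Rightarrow> real \<Rightarrow> complex" and \<theta>e :: "real \<Rightarrow> real \<Rightarrow> real"
  assumes l_pos: "l > 0"
    and C_pos: "C > 0"
    and gamma_C2: "continuous_on {0..l} \<gamma>'" "continuous_on {0..l} \<gamma>''"
      "\<forall>s\<in>{0..l}. (\<gamma> has_vector_derivative \<gamma>' s) (at s within {0..l})"
      "\<forall>s\<in>{0..l}. (\<gamma>' has_vector_derivative \<gamma>'' s) (at s within {0..l})"
    and gamma_closed: "\<gamma> 0 = \<gamma> l" "\<gamma>' 0 = \<gamma>' l" "\<gamma>'' 0 = \<gamma>'' l"
    and theta_lift: "continuous_on {0..l} \<theta>" "\<forall>s\<in>{0..l}. \<gamma>' s = cis (\<theta> s)"
    and thetae_H1: "\<forall>\<epsilon>\<in>{0<..1}. H1 l (\<theta>e \<epsilon>)"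
    and gammae_lift: "\<forall>\<epsilon>\<in>{0<..1}. \<forall>s\<in>{0..l}.
          (\<gamma>e \<epsilon> has_vector_derivative cis (\<theta>e \<epsilon> s)) (at s within {0..l})"
    and gammae_closed: "\<forall>\<epsilon>\<in>{0<..1}. \<gamma>e \<epsilon> 0 = \<gamma>e \<epsilon> l \<and> cis (\<theta>e \<epsilon> 0) = cis (\<theta>e \<epsilon> l)"
    and bound_curv: "\<forall>\<epsilon>\<in>{0<..1}.
          sqrt \<epsilon> * integral {0..l} (\<lambda>s. (wderiv l (\<theta>e \<epsilon>) s)^2) \<le> C"
    and bound_tangent: "\<forall>\<epsilon>\<in>{0<..1}.
          integral {0..l} (\<lambda>s. (cmod (cis (\<theta>e \<epsilon> s) - \<gamma>' s))^2) \<le> C * sqrt \<epsilon>"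
  shows "((\<lambda>\<epsilon>. flat_norm l (pair_density l (\<lambda>s.
            2 * pi / (8 * sqrt 2) * wderiv l (\<lambda>t. Phi (\<theta>e \<epsilon> t - \<theta> t)) s
            - wderiv l (\<lambda>t. \<theta>e \<epsilon> t - \<theta> t) s))) \<longlongrightarrow> 0) (at_right 0)
     \<and> (\<forall>\<epsilon>k :: nat \<Rightarrow> real. \<forall>N c p.
          (\<forall>k. \<epsilon>k k \<in> {0<..1}) \<and> \<epsilon>k \<longlonglongrightarrow> 0 \<and> Mfin_Z l N c p \<and>
          (\<lambda>k. flat_norm l (\<lambda>\<psi>. pair_density l (\<lambda>s. wderiv l (\<theta>e (\<epsilon>k k)) s - wderiv l \<theta> s) \<psi>
                                   - pair_atoms N c p \<psi>)) \<longlonglongrightarrow> 0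
          \<longrightarrow> (\<lambda>k. flat_norm l (\<lambda>\<psi>. pair_density l (\<lambda>s. 2 * pi / (8 * sqrt 2) *
                     wderiv l (\<lambda>t. Phi (\<theta>e (\<epsilon>k k) t - \<theta> t)) s) \<psi>
                                   - pair_atoms N c p \<psi>)) \<longlonglongrightarrow> 0)"
proof -
  have l0: "l \<ge> 0" using l_pos by simp
  define \<theta>d where "\<theta>d = (\<lambda>s. Im (\<gamma>'' s * cnj (\<gamma>' s)))"
  have thd: "\<And>s. s \<in> {0..l} \<Longrightarrow> (\<theta> has_real_derivative \<theta>d s) (at s within {0..l})"
    unfolding \<theta>d_def by (rule theta_deriv[OF theta_lift(1) theta_lift(2) gamma_C2(4)])
  have thdc: "continuous_on {0..l} \<theta>d" unfolding \<theta>d_def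
    by (intro continuous_intros gamma_C2(1) gamma_C2(2))
  have thw: "has_weak_deriv l \<theta> \<theta>d"
    unfolding has_weak_deriv_def
    using absolutely_integrable_continuous_real[OF thdc] theta_ftc[OF thd] by blast
  have lift0: "\<gamma>' 0 = cis (\<theta> 0)" "\<gamma>' l = cis (\<theta> l)" using theta_lift(2) l0 by auto
  have per_th: "cis (\<theta> 0) = cis (\<theta> l)" using gamma_closed(2) lift0 by simp
  define K where "K = 9 * ((C + l) / 2)"
  have Kpos: "K \<ge> 0" using C_pos l0 by (simp add: K_def)
  have Tc: "continuous_on {0..l} (\<theta>e \<epsilon>)" if e: "\<epsilon> \<in> {0<..1}" for \<epsilon>
  proof -
    obtain g where g: "has_weak_deriv l (\<theta>e \<epsilon>) g" using thetae_H1 e unfolding H1_def by blast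
    then have "g absolutely_integrable_on {0..l}" "\<forall>s\<in>{0..l}. \<theta>e \<epsilon> s = \<theta>e \<epsilon> 0 + integral {0..s} g"
      unfolding has_weak_deriv_def by blast+
    then show ?thesis using prim_cont ai_parts(1) by blast
  qed
  have key: "\<bar>pair_density l (\<lambda>s. 2 * pi / (8 * sqrt 2) * wderiv l (\<lambda>t. Phi (\<theta>e \<epsilon> t - \<theta> t)) s
            - wderiv l (\<lambda>t. \<theta>e \<epsilon> t - \<theta> t) s) \<psi>\<bar> \<le> K * sqrt (sqrt \<epsilon>)"
    if e: "\<epsilon> \<in> {0<..1}" and ft: "flat_test l \<psi>" for \<epsilon> \<psi>
  proof -
    have per: "cis (\<theta>e \<epsilon> 0) = cis (\<theta>e \<epsilon> l)" using gammae_closed e by blast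
    have "\<bar>pair_density l (\<lambda>s. 2 * pi / (8 * sqrt 2) * wderiv l (\<lambda>t. Phi (\<theta>e \<epsilon> t - \<theta> t)) s
            - wderiv l (\<lambda>t. \<theta>e \<epsilon> t - \<theta> t) s) \<psi>\<bar> \<le> integral {0..l} (\<lambda>x. \<bar>gf (\<theta>e \<epsilon> x - \<theta> x)\<bar>)"
      using eps_main(1)[OF l_pos _ thw per per_th ft] thetae_H1 e by blast
    also have "\<dots> \<le> K * sqrt (sqrt \<epsilon>)"
      unfolding K_def
      by (rule tangent_bound[OF l_pos Tc[OF e] theta_lift(1) gamma_C2(1) theta_lift(2) _ C_pos])
        (use e bound_tangent in auto)
    finally show ?thesis .
  qed
  show ?thesis
  proof (intro conjI allI impI)
    show "((\<lambda>\<epsilon>. flat_norm l (pair_density l (\<lambda>s.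
            2 * pi / (8 * sqrt 2) * wderiv l (\<lambda>t. Phi (\<theta>e \<epsilon> t - \<theta> t)) s
            - wderiv l (\<lambda>t. \<theta>e \<epsilon> t - \<theta> t) s))) \<longlongrightarrow> 0) (at_right 0)"
    proof (rule tendsto_sandwich[of "\<lambda>_. 0" _ _ "\<lambda>\<epsilon>. K * sqrt (sqrt \<epsilon>)"])
      have ev: "eventually (\<lambda>\<epsilon>. \<epsilon> \<in> {0<..1}) (at_right (0::real))"
        unfolding eventually_at_right_field by (intro exI[of _ 1]) auto
      show "eventually (\<lambda>\<epsilon>. 0 \<le> flat_norm l (pair_density l (\<lambda>s.
            2 * pi / (8 * sqrt 2) * wderiv l (\<lambda>t. Phi (\<theta>e \<epsilon> t - \<theta> t)) s
            - wderiv l (\<lambda>t. \<theta>e \<epsilon> t - \<theta> t) s))) (at_right 0)"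
        using ev
      proof (rule eventually_mono)
        fix \<epsilon> :: real assume e: "\<epsilon> \<in> {0<..1}"
        show "0 \<le> flat_norm l (pair_density l (\<lambda>s.
            2 * pi / (8 * sqrt 2) * wderiv l (\<lambda>t. Phi (\<theta>e \<epsilon> t - \<theta> t)) s
            - wderiv l (\<lambda>t. \<theta>e \<epsilon> t - \<theta> t) s))"
          by (rule flat_norm_bounds(1)[of _ _ "K * sqrt (sqrt \<epsilon>)"],
              rule order_trans[OF abs_ge_self key[OF e]], assumption, simp add: pair_density_def)
      qed
      show "eventually (\<lambda>\<epsilon>. flat_norm l (pair_density l (\<lambda>s.
            2 * pi / (8 * sqrt 2) * wderiv l (\<lambda>t. Phi (\<theta>e \<epsilon> t - \<theta> t)) s
            - wderiv l (\<lambda>t. \<theta>e \<epsilon> t - \<theta> t) s)) \<le> K * sqrt (sqrt \<epsilon>)) (at_right 0)"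
        using ev
      proof (rule eventually_mono)
        fix \<epsilon> :: real assume e: "\<epsilon> \<in> {0<..1}"
        show "flat_norm l (pair_density l (\<lambda>s.
            2 * pi / (8 * sqrt 2) * wderiv l (\<lambda>t. Phi (\<theta>e \<epsilon> t - \<theta> t)) s
            - wderiv l (\<lambda>t. \<theta>e \<epsilon> t - \<theta> t) s)) \<le> K * sqrt (sqrt \<epsilon>)"
          by (rule flat_norm_bounds(2),
              rule order_trans[OF abs_ge_self key[OF e]], assumption, simp add: pair_density_def)
      qed
      show "((\<lambda>_. 0) \<longlongrightarrow> (0::real)) (at_right 0)" by simp
      have "((\<lambda>\<epsilon>. K * sqrt (sqrt \<epsilon>)) \<longlongrightarrow> K * sqrt (sqrt 0)) (at_right (0::real))"
        by (intro tendsto_intros)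
      then show "((\<lambda>\<epsilon>. K * sqrt (sqrt \<epsilon>)) \<longlongrightarrow> 0) (at_right 0)" by simp
    qed
  next
    fix \<epsilon>k :: "nat \<Rightarrow> real" and N c p
    assume A: "(\<forall>k. \<epsilon>k k \<in> {0<..1}) \<and> \<epsilon>k \<longlonglongrightarrow> 0 \<and> Mfin_Z l N c p \<and>
          (\<lambda>k. flat_norm l (\<lambda>\<psi>. pair_density l (\<lambda>s. wderiv l (\<theta>e (\<epsilon>k k)) s - wderiv l \<theta> s) \<psi>
                                   - pair_atoms N c p \<psi>)) \<longlonglongrightarrow> 0"
    then have ek: "\<And>k. \<epsilon>k k \<in> {0<..1}" and elim: "\<epsilon>k \<longlonglongrightarrow> 0" and M: "Mfin_Z l N c p"
      and Alim: "(\<lambda>k. flat_norm l (\<lambda>\<psi>. pair_density l (\<lambda>s. wderiv l (\<theta>e (\<epsilon>k k)) s - wderiv l \<theta> s) \<psi>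
                                   - pair_atoms N c p \<psi>)) \<longlonglongrightarrow> 0" by blast+
    define A where "A = (\<lambda>k. flat_norm l (\<lambda>\<psi>. pair_density l (\<lambda>s. wderiv l (\<theta>e (\<epsilon>k k)) s - wderiv l \<theta> s) \<psi>
                                   - pair_atoms N c p \<psi>))"
    define S where "S = 2 * pi * (\<Sum>j<N. \<bar>of_int (c j)\<bar>)"
    have bdA: "pair_density l (\<lambda>s. wderiv l (\<theta>e (\<epsilon>k k)) s - wderiv l \<theta> s) \<psi> - pair_atoms N c p \<psi>
        \<le> integral {0..l} (\<lambda>s. \<bar>wderiv l (\<theta>e (\<epsilon>k k)) s - wderiv l \<theta> s\<bar>) + S"
      if ft: "flat_test l \<psi>" for k \<psi>
    proof -
      have per: "cis (\<theta>e (\<epsilon>k k) 0) = cis (\<theta>e (\<epsilon>k k) l)" using gammae_closed ek by blast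
      have "\<bar>pair_density l (\<lambda>s. wderiv l (\<theta>e (\<epsilon>k k)) s - wderiv l \<theta> s) \<psi>\<bar>
          \<le> integral {0..l} (\<lambda>s. \<bar>wderiv l (\<theta>e (\<epsilon>k k)) s - wderiv l \<theta> s\<bar>)"
        using eps_main(4)[OF l_pos _ thw per per_th ft] thetae_H1 ek by blast
      moreover have "\<bar>pair_atoms N c p \<psi>\<bar> \<le> S" unfolding S_def by (rule atoms_bound[OF M ft l0])
      ultimately show ?thesis by linarith
    qed
    have bdB: "pair_density l (\<lambda>s. 2 * pi / (8 * sqrt 2) *
                     wderiv l (\<lambda>t. Phi (\<theta>e (\<epsilon>k k) t - \<theta> t)) s) \<psi> - pair_atoms N c p \<psi>
        \<le> K * sqrt (sqrt (\<epsilon>k k)) + A k"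
      if ft: "flat_test l \<psi>" for k \<psi>
    proof -
      have per: "cis (\<theta>e (\<epsilon>k k) 0) = cis (\<theta>e (\<epsilon>k k) l)" using gammae_closed ek by blast
      have eq: "pair_density l (\<lambda>s. 2 * pi / (8 * sqrt 2) * wderiv l (\<lambda>t. Phi (\<theta>e (\<epsilon>k k) t - \<theta> t)) s) \<psi>
        = pair_density l (\<lambda>s. 2 * pi / (8 * sqrt 2) * wderiv l (\<lambda>t. Phi (\<theta>e (\<epsilon>k k) t - \<theta> t)) s
            - wderiv l (\<lambda>t. \<theta>e (\<epsilon>k k) t - \<theta> t) s) \<psi>
          + pair_density l (\<lambda>s. wderiv l (\<theta>e (\<epsilon>k k)) s - wderiv l \<theta> s) \<psi>"
        using eps_main(3)[OF l_pos _ thw per per_th ft] thetae_H1 ek by blast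
      have k1: "\<bar>pair_density l (\<lambda>s. 2 * pi / (8 * sqrt 2) * wderiv l (\<lambda>t. Phi (\<theta>e (\<epsilon>k k) t - \<theta> t)) s
            - wderiv l (\<lambda>t. \<theta>e (\<epsilon>k k) t - \<theta> t) s) \<psi>\<bar> \<le> K * sqrt (sqrt (\<epsilon>k k))"
        by (rule key[OF ek ft])
      have k2: "pair_density l (\<lambda>s. wderiv l (\<theta>e (\<epsilon>k k)) s - wderiv l \<theta> s) \<psi> - pair_atoms N c p \<psi> \<le> A k"
        unfolding A_def
        by (rule flat_norm_ge[where \<nu>="\<lambda>\<psi>. pair_density l (\<lambda>s. wderiv l (\<theta>e (\<epsilon>k k)) s - wderiv l \<theta> s) \<psi>
                                   - pair_atoms N c p \<psi>", OF bdA ft]) 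
      show ?thesis using eq k1 k2 by linarith
    qed
    show "(\<lambda>k. flat_norm l (\<lambda>\<psi>. pair_density l (\<lambda>s. 2 * pi / (8 * sqrt 2) *
                     wderiv l (\<lambda>t. Phi (\<theta>e (\<epsilon>k k) t - \<theta> t)) s) \<psi>
                                   - pair_atoms N c p \<psi>)) \<longlonglongrightarrow> 0"
    proof (rule tendsto_sandwich[of "\<lambda>_. 0" _ _ "\<lambda>k. K * sqrt (sqrt (\<epsilon>k k)) + A k"])
      show "eventually (\<lambda>k. 0 \<le> flat_norm l (\<lambda>\<psi>. pair_density l (\<lambda>s. 2 * pi / (8 * sqrt 2) *
                     wderiv l (\<lambda>t. Phi (\<theta>e (\<epsilon>k k) t - \<theta> t)) s) \<psi>
                                   - pair_atoms N c p \<psi>)) sequentially"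
        by (intro always_eventually allI flat_norm_bounds(1)[OF bdB])
          (simp_all add: pair_density_def pair_atoms_def)
      show "eventually (\<lambda>k. flat_norm l (\<lambda>\<psi>. pair_density l (\<lambda>s. 2 * pi / (8 * sqrt 2) *
                     wderiv l (\<lambda>t. Phi (\<theta>e (\<epsilon>k k) t - \<theta> t)) s) \<psi>
                                   - pair_atoms N c p \<psi>) \<le> K * sqrt (sqrt (\<epsilon>k k)) + A k) sequentially"
        by (intro always_eventually allI flat_norm_bounds(2)[OF bdB])
          (simp_all add: pair_density_def pair_atoms_def)
      show "((\<lambda>_. 0) \<longlongrightarrow> (0::real)) sequentially" by simp
      have "((\<lambda>k. K * sqrt (sqrt (\<epsilon>k k)) + A k) \<longlongrightarrow> K * sqrt (sqrt 0) + 0) sequentially"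
        by (intro tendsto_intros elim) (use Alim in \<open>simp add: A_def\<close>)
      then show "((\<lambda>k. K * sqrt (sqrt (\<epsilon>k k)) + A k) \<longlongrightarrow> 0) sequentially" by simp
    qed
  qed
qed

end
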